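(* Let $(T^{E}_{m},T^{\mathbb{K}}_{m})_{m\in M}$ be a generator for $(\mathcal{FV},E)$, let $X$ be a set, $\mathfrak{K}$ a family of sets with $\bigcup_{K\in\mathfrak{K}}K\subset X$ which is closed under finite unions, and $\pi\colon\bigcup_{m\in M}\omega_m\to X$ a map. Suppose $\mathcal{FV}(\Omega,Y)\subset\operatorname{AP}_{\pi,\mathfrak{K}}(\Omega,Y)$ as a linear subspace for $Y\in\{\mathbb{K},E\}$. Then: (1) if for every $u\in\mathcal{FV}(\Omega)\varepsilon E$, $m\in M$, $x\in\omega_m$ one has $S(u)\in\operatorname{dom}T^E_m$ and $T^E_m(S(u))(x)=u(T^{\mathbb{K}}_{m,x})$, then $S(u)\in\operatorname{AP}_{\pi,\mathfrak{K}}(\Omega,E)$ for all $u\in\mathcal{FV}(\Omega)\varepsilon E$; (2) if for every $e'\in E'$, $f\in\mathcal{FV}(\Omega,E)$, $m\in M$ one has $e'\circ f\in\operatorname{dom}T^{\mathbb{K}}_m$ and $T^{\mathbb{K}}_m(e'\circ f)=e'\circ T^E_m(f)$ on $\omega_m$, then $e'\circ f\in\operatorname{AP}_{\pi,\mathfrak{K}}(\Omega,\mathbb{K})$ for all $e'\in E'$ and $f\in\mathcal{FV}(\Omega,E)$.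
   Context: $\mathbb{K}\in\{\mathbb{R},\mathbb{C}\}$, $E$ a non-trivial locally convex Hausdorff space over $\mathbb{K}$ with directed fundamental system of seminorms $(p_\alpha)_{\alpha\in\mathfrak{A}}$. Let $\Omega$ be a non-empty set, $J,M$ non-empty index sets, $(\omega_m)_{m\in M}$ non-empty sets, $\nu_{j,m}\colon\omega_m\to[0,\infty)$ such that for all $m$, $x\in\omega_m$ some $\nu_{j,m}(x)>0$. For $Y\in\{\mathbb{K},E\}$ (for $\mathbb{K}$ only $|\cdot|$), let $\operatorname{AP}(\Omega,Y)\subset Y^\Omega$ be a linear subspace and $T^Y_m\colon\operatorname{dom}T^Y_m\to Y^{\omega_m}$ linear maps on linear subspaces $\operatorname{dom}T^Y_m\subset Y^\Omega$. $\mathcal{FV}(\Omega,Y):=\{f\in\operatorname{AP}(\Omega,Y)\cap\bigcap_m\operatorname{dom}T^Y_m: |f|_{j,m,\alpha}:=\sup_{x\in\omega_m}p_\alpha(T^Y_m(f)(x))\nu_{j,m}(x)<\infty\ \forall j,m,\alpha\}$ with these seminorms; $\mathcal{FV}(\Omega):=\mathcal{FV}(\Omega,\mathbb{K})$, $T^Y_{m,x}(f):=T^Y_m(f)(x)$. Dom-space: Hausdorff, directed seminorms, and for $Y=\mathbb{K}$ all point evaluations $\delta_x$ are in $\mathcal{FV}(\Omega)'$. Generator for $(\mathcal{FV},E)$: $(T^E_m,T^{\mathbb{K}}_m)_{m\in M}$ with $\mathcal{FV}(\Omega)$, $\mathcal{FV}(\Omega,E)$ dom-spaces over the same $J,M,\omega_m,\nu_{j,m}$.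 $\mathcal{FV}(\Omega)\varepsilon E$: continuous linear maps from $\mathcal{FV}(\Omega)'$ (topology of uniform convergence on absolutely convex compact sets) to $E$, with the topology of uniform convergence on equicontinuous sets; $S(u)(x):=u(\delta_x)$. $\operatorname{AP}_{\pi,\mathfrak{K}}(\Omega,Y)$ is the set of $f\in\bigcap_{m}\operatorname{dom}T^Y_m$ such that for all $\varepsilon>0$, $j\in J$, $m\in M$, $\alpha$ there is $K\in\mathfrak{K}$ with (i) $\sup_{x\in\omega_m,\ \pi(x)\notin K}p_\alpha(T^Y_m(f)(x))\nu_{j,m}(x)<\varepsilon$ and (ii) $\{T^Y_m(f)(x)\nu_{j,m}(x): x\in\omega_m,\ \pi(x)\in K\}$ is precompact in $Y$. *)

theory Defs
  imports "HOL-Analysis.Analysis"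
begin

text \<open>The locally convex topology on a carrier V generated by the seminorms q i (i in I);
  diff is the subtraction of the vector space.\<close>
definition seminorm_topology ::
  "'v set \<Rightarrow> ('v \<Rightarrow> 'v \<Rightarrow> 'v) \<Rightarrow> 'i set \<Rightarrow> ('i \<Rightarrow> 'v \<Rightarrow> real) \<Rightarrow> 'v topology" where
  "seminorm_topology V diff I q = topology (\<lambda>U. U \<subseteq> V \<and>
     (\<forall>x\<in>U. \<exists>F \<epsilon>. finite F \<and> F \<subseteq> I \<and> \<epsilon> > 0 \<and>
        {y \<in> V. \<forall>i\<in>F. q i (diff y x) < \<epsilon>} \<subseteq> U))"

definition precompact_sn :: "('v \<Rightarrow> 'v \<Rightarrow> 'v) \<Rightarrow> ('i \<Rightarrow> 'v \<Rightarrow> real) \<Rightarrow> 'v set \<Rightarrow> bool" where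
  "precompact_sn diff q A \<longleftrightarrow> (\<forall>F \<epsilon>. finite F \<and> \<epsilon> > 0 \<longrightarrow>
     (\<exists>G. finite G \<and> A \<subseteq> (\<Union>g\<in>G. {y. \<forall>i\<in>F. q i (diff y g) < \<epsilon>})))"

definition fsubspace :: "('k \<Rightarrow> 'y::ab_group_add \<Rightarrow> 'y) \<Rightarrow> ('o \<Rightarrow> 'y) set \<Rightarrow> bool" where
  "fsubspace s V \<longleftrightarrow> (\<lambda>_. 0) \<in> V \<and> (\<forall>f\<in>V. \<forall>g\<in>V. (\<lambda>t. f t + g t) \<in> V) \<and>
     (\<forall>c. \<forall>f\<in>V. (\<lambda>t. s c (f t)) \<in> V)"

definition flinear_on :: "('k \<Rightarrow> 'y::ab_group_add \<Rightarrow> 'y) \<Rightarrow> ('o \<Rightarrow> 'y) set \<Rightarrow> 'w set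
    \<Rightarrow> (('o \<Rightarrow> 'y) \<Rightarrow> 'w \<Rightarrow> 'y) \<Rightarrow> bool" where
  "flinear_on s D W T \<longleftrightarrow>
     (\<forall>f\<in>D. \<forall>g\<in>D. \<forall>x\<in>W. T (\<lambda>t. f t + g t) x = T f x + T g x) \<and>
     (\<forall>c. \<forall>f\<in>D. \<forall>x\<in>W. T (\<lambda>t. s c (f t)) x = s c (T f x))"

definition FV :: "('o \<Rightarrow> 'y) set \<Rightarrow> ('m \<Rightarrow> ('o \<Rightarrow> 'y) set) \<Rightarrow> ('m \<Rightarrow> ('o \<Rightarrow> 'y) \<Rightarrow> 'w \<Rightarrow> 'y)
    \<Rightarrow> ('m \<Rightarrow> 'w set) \<Rightarrow> ('j \<Rightarrow> 'm \<Rightarrow> 'w \<Rightarrow> real) \<Rightarrow> ('a \<Rightarrow> 'y \<Rightarrow> real) \<Rightarrow> ('o \<Rightarrow> 'y) set" where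
  "FV AP domT T \<omega> \<nu> q = {f \<in> AP. (\<forall>m. f \<in> domT m) \<and>
     (\<forall>j m \<alpha>. bdd_above ((\<lambda>x. q \<alpha> (T m f x) * \<nu> j m x) ` \<omega> m))}"

definition FVnorm :: "('m \<Rightarrow> ('o \<Rightarrow> 'y) \<Rightarrow> 'w \<Rightarrow> 'y) \<Rightarrow> ('m \<Rightarrow> 'w set) \<Rightarrow> ('j \<Rightarrow> 'm \<Rightarrow> 'w \<Rightarrow> real)
    \<Rightarrow> ('a \<Rightarrow> 'y \<Rightarrow> real) \<Rightarrow> 'j \<times> 'm \<times> 'a \<Rightarrow> ('o \<Rightarrow> 'y) \<Rightarrow> real" where
  "FVnorm T \<omega> \<nu> q i f = (case i of (j, m, \<alpha>) \<Rightarrow> (SUP x\<in>\<omega> m. q \<alpha> (T m f x) * \<nu> j m x))"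

definition fdiff :: "('o \<Rightarrow> 'y::ab_group_add) \<Rightarrow> ('o \<Rightarrow> 'y) \<Rightarrow> 'o \<Rightarrow> 'y" where
  "fdiff f g = (\<lambda>t. f t - g t)"

definition hausdorff_directed :: "('o \<Rightarrow> 'y::ab_group_add) set \<Rightarrow> ('i \<Rightarrow> ('o \<Rightarrow> 'y) \<Rightarrow> real) \<Rightarrow> bool" where
  "hausdorff_directed V q \<longleftrightarrow>
     (\<forall>f\<in>V. f \<noteq> (\<lambda>_. 0) \<longrightarrow> (\<exists>i. q i f \<noteq> 0)) \<and>
     (\<forall>i1 i2. \<exists>i3 C. \<forall>f\<in>V. max (q i1 f) (q i2 f) \<le> C * q i3 f)"

text \<open>Topological dual of a scalar function space V with seminorms q. Functionals are
  represented extensionally (value 0 outside V).\<close>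
definition fdual :: "('o \<Rightarrow> 'k::real_normed_field) set \<Rightarrow> ('i \<Rightarrow> ('o \<Rightarrow> 'k) \<Rightarrow> real)
    \<Rightarrow> (('o \<Rightarrow> 'k) \<Rightarrow> 'k) set" where
  "fdual V q = {y. (\<forall>f\<in>V. \<forall>g\<in>V. y (\<lambda>t. f t + g t) = y f + y g) \<and>
       (\<forall>c. \<forall>f\<in>V. y (\<lambda>t. c * f t) = c * y f) \<and>
       continuous_map (seminorm_topology V fdiff UNIV q) euclidean y \<and>
       (\<forall>f. f \<notin> V \<longrightarrow> y f = 0)}"

definition delta_on :: "('o \<Rightarrow> 'k::zero) set \<Rightarrow> 'o \<Rightarrow> ('o \<Rightarrow> 'k) \<Rightarrow> 'k" where
  "delta_on V x = (\<lambda>f. if f \<in> V then f x else 0)"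

definition Tfunctional :: "('o \<Rightarrow> 'k::zero) set \<Rightarrow> ('m \<Rightarrow> ('o \<Rightarrow> 'k) \<Rightarrow> 'w \<Rightarrow> 'k) \<Rightarrow> 'm \<Rightarrow> 'w
    \<Rightarrow> ('o \<Rightarrow> 'k) \<Rightarrow> 'k" where
  "Tfunctional V T m x = (\<lambda>f. if f \<in> V then T m f x else 0)"

definition acx_compacts :: "('o \<Rightarrow> 'k::real_normed_field) set \<Rightarrow> ('i \<Rightarrow> ('o \<Rightarrow> 'k) \<Rightarrow> real)
    \<Rightarrow> ('o \<Rightarrow> 'k) set set" where
  "acx_compacts V q = {B. B \<subseteq> V \<and> compactin (seminorm_topology V fdiff UNIV q) B \<and>
      (\<forall>f\<in>B. \<forall>g\<in>B. \<forall>a b. norm a + norm b \<le> 1 \<longrightarrow> (\<lambda>t. a * f t + b * g t) \<in> B)}"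

definition kappa_sn :: "('o \<Rightarrow> 'k::real_normed_field) set \<Rightarrow> ((('o \<Rightarrow> 'k) \<Rightarrow> 'k) \<Rightarrow> real)" where
  "kappa_sn B y = Sup (insert 0 ((\<lambda>f. norm (y f)) ` B))"

definition eps_prod :: "('o \<Rightarrow> 'k::real_normed_field) set \<Rightarrow> ('i \<Rightarrow> ('o \<Rightarrow> 'k) \<Rightarrow> real)
    \<Rightarrow> ('k \<Rightarrow> 'e::ab_group_add \<Rightarrow> 'e) \<Rightarrow> ('a \<Rightarrow> 'e \<Rightarrow> real) \<Rightarrow> ((('o \<Rightarrow> 'k) \<Rightarrow> 'k) \<Rightarrow> 'e) set" where
  "eps_prod V q sc p = {u.
     (\<forall>y1\<in>fdual V q. \<forall>y2\<in>fdual V q. u (\<lambda>f. y1 f + y2 f) = u y1 + u y2) \<and>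
     (\<forall>c. \<forall>y\<in>fdual V q. u (\<lambda>f. c * y f) = sc c (u y)) \<and>
     continuous_map (seminorm_topology (fdual V q) fdiff (acx_compacts V q) kappa_sn)
                    (seminorm_topology UNIV (-) UNIV p) u}"

definition S_map :: "('o \<Rightarrow> 'k::zero) set \<Rightarrow> ((('o \<Rightarrow> 'k) \<Rightarrow> 'k) \<Rightarrow> 'e) \<Rightarrow> 'o \<Rightarrow> 'e" where
  "S_map V u = (\<lambda>x. u (delta_on V x))"

definition Edual :: "('k::real_normed_field \<Rightarrow> 'e::ab_group_add \<Rightarrow> 'e) \<Rightarrow> ('a \<Rightarrow> 'e \<Rightarrow> real)
    \<Rightarrow> ('e \<Rightarrow> 'k) set" where
  "Edual sc p = {e'. (\<forall>a b. e' (a + b) = e' a + e' b) \<and> (\<forall>c a. e' (sc c a) = c * e' a) \<and>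
      continuous_map (seminorm_topology UNIV (-) UNIV p) euclidean e'}"

text \<open>rs r y is the multiplication of y by the real scalar r; the condition
  "sup ... < eps" is written as the existence of a bound c < eps (with sup of the empty set 0).\<close>
definition AP_pi :: "('w \<Rightarrow> 'x) \<Rightarrow> 'x set set \<Rightarrow> ('m \<Rightarrow> 'w set) \<Rightarrow> ('j \<Rightarrow> 'm \<Rightarrow> 'w \<Rightarrow> real)
    \<Rightarrow> ('m \<Rightarrow> ('o \<Rightarrow> 'y) set) \<Rightarrow> ('m \<Rightarrow> ('o \<Rightarrow> 'y) \<Rightarrow> 'w \<Rightarrow> 'y) \<Rightarrow> ('a \<Rightarrow> 'y \<Rightarrow> real)
    \<Rightarrow> ('y \<Rightarrow> 'y \<Rightarrow> 'y) \<Rightarrow> (real \<Rightarrow> 'y \<Rightarrow> 'y) \<Rightarrow> ('o \<Rightarrow> 'y) set" where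
  "AP_pi \<pi> \<KK> \<omega> \<nu> domT T q diff rs = {f. (\<forall>m. f \<in> domT m) \<and>
     (\<forall>\<epsilon>>0. \<forall>j m \<alpha>. \<exists>K\<in>\<KK>.
        (\<exists>c<\<epsilon>. \<forall>x\<in>\<omega> m. \<pi> x \<notin> K \<longrightarrow> q \<alpha> (T m f x) * \<nu> j m x \<le> c) \<and>
        precompact_sn diff q {rs (\<nu> j m x) (T m f x) | x. x \<in> \<omega> m \<and> \<pi> x \<in> K})}"

end

theory Submission imports Defs begin

lemma sn_istopology:
  fixes V :: "'v set" and I :: "'i set" and diff :: "'v \<Rightarrow> 'v \<Rightarrow> 'w" and q :: "'i \<Rightarrow> 'w \<Rightarrow> real"
  shows "istopology (\<lambda>U. U \<subseteq> V \<and> (\<forall>x\<in>U. \<exists>F \<epsilon>. finite F \<and> F \<subseteq> I \<and> \<epsilon> > 0 \<and>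
        {y \<in> V. \<forall>i\<in>F. q i (diff y x) < \<epsilon>} \<subseteq> U))"
  unfolding istopology_def
proof (rule conjI; intro allI impI)
  fix S T assume S: "S \<subseteq> V \<and> (\<forall>x\<in>S. \<exists>F \<epsilon>. finite F \<and> F \<subseteq> I \<and> \<epsilon> > 0 \<and>
        {y \<in> V. \<forall>i\<in>F. q i (diff y x) < \<epsilon>} \<subseteq> S)"
    and T: "T \<subseteq> V \<and> (\<forall>x\<in>T. \<exists>F \<epsilon>. finite F \<and> F \<subseteq> I \<and> \<epsilon> > 0 \<and>
        {y \<in> V. \<forall>i\<in>F. q i (diff y x) < \<epsilon>} \<subseteq> T)"
  show "S \<inter> T \<subseteq> V \<and> (\<forall>x\<in>S \<inter> T. \<exists>F \<epsilon>. finite F \<and> F \<subseteq> I \<and> \<epsilon> > 0 \<and>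
        {y \<in> V. \<forall>i\<in>F. q i (diff y x) < \<epsilon>} \<subseteq> S \<inter> T)"
  proof (intro conjI ballI)
    show "S \<inter> T \<subseteq> V" using S by blast
    fix x assume x: "x \<in> S \<inter> T"
    have xS: "x \<in> S" and xT: "x \<in> T" using x by auto
    obtain F1 e1 where 1: "finite F1" "F1 \<subseteq> I" "e1 > 0" "{y \<in> V. \<forall>i\<in>F1. q i (diff y x) < e1} \<subseteq> S"
      using bspec[OF conjunct2[OF S] xS] by (elim exE conjE)
    obtain F2 e2 where 2: "finite F2" "F2 \<subseteq> I" "e2 > 0" "{y \<in> V. \<forall>i\<in>F2. q i (diff y x) < e2} \<subseteq> T"
      using bspec[OF conjunct2[OF T] xT] by (elim exE conjE)
    have "{y \<in> V. \<forall>i\<in>F1 \<union> F2. q i (diff y x) < min e1 e2} \<subseteq> S \<inter> T"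
    proof
      fix y assume y: "y \<in> {y \<in> V. \<forall>i\<in>F1 \<union> F2. q i (diff y x) < min e1 e2}"
      then have "y \<in> {y \<in> V. \<forall>i\<in>F1. q i (diff y x) < e1}" by auto
      moreover have "y \<in> {y \<in> V. \<forall>i\<in>F2. q i (diff y x) < e2}" using y by auto
      ultimately show "y \<in> S \<inter> T" using 1(4) 2(4) by blast
    qed
    moreover have "finite (F1 \<union> F2)" "F1 \<union> F2 \<subseteq> I" "min e1 e2 > 0" using 1 2 by auto
    ultimately show "\<exists>F \<epsilon>. finite F \<and> F \<subseteq> I \<and> \<epsilon> > 0 \<and> {y \<in> V. \<forall>i\<in>F. q i (diff y x) < \<epsilon>} \<subseteq> S \<inter> T"
      by (intro exI[of _ "F1 \<union> F2"] exI[of _ "min e1 e2"] conjI) assumption+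
  qed
next
  fix K assume K: "\<forall>U\<in>K. U \<subseteq> V \<and> (\<forall>x\<in>U. \<exists>F \<epsilon>. finite F \<and> F \<subseteq> I \<and> \<epsilon> > 0 \<and>
        {y \<in> V. \<forall>i\<in>F. q i (diff y x) < \<epsilon>} \<subseteq> U)"
  then show "\<Union>K \<subseteq> V \<and> (\<forall>x\<in>\<Union>K. \<exists>F \<epsilon>. finite F \<and> F \<subseteq> I \<and> \<epsilon> > 0 \<and>
        {y \<in> V. \<forall>i\<in>F. q i (diff y x) < \<epsilon>} \<subseteq> \<Union>K)"
  proof (intro conjI ballI)
    show "\<Union>K \<subseteq> V" using K by (simp add: Union_least)
    fix x assume "x \<in> \<Union>K"
    then obtain U where U: "U \<in> K" "x \<in> U" by blast
    have "\<exists>F \<epsilon>. finite F \<and> F \<subseteq> I \<and> \<epsilon> > 0 \<and> {y \<in> V. \<forall>i\<in>F. q i (diff y x) < \<epsilon>} \<subseteq> U"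
      using bspec[OF conjunct2[OF bspec[OF K U(1)]] U(2)] .
    then obtain F \<epsilon> where a: "finite F" "F \<subseteq> I" "\<epsilon> > 0" and b: "{y \<in> V. \<forall>i\<in>F. q i (diff y x) < \<epsilon>} \<subseteq> U"
      by (elim exE conjE)
    have c: "{y \<in> V. \<forall>i\<in>F. q i (diff y x) < \<epsilon>} \<subseteq> \<Union>K"
      using b U(1) by (rule subset_trans[OF _ Union_upper])
    show "\<exists>F \<epsilon>. finite F \<and> F \<subseteq> I \<and> \<epsilon> > 0 \<and> {y \<in> V. \<forall>i\<in>F. q i (diff y x) < \<epsilon>} \<subseteq> \<Union>K"
      by (rule exI[of _ F], rule exI[of _ \<epsilon>]) (intro conjI a c)
  qed
qed

lemma openin_sn:
  "openin (seminorm_topology V diff I q) U \<longleftrightarrow> U \<subseteq> V \<and> (\<forall>x\<in>U. \<exists>F \<epsilon>. finite F \<and> F \<subseteq> I \<and> \<epsilon> > 0 \<and>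
        {y \<in> V. \<forall>i\<in>F. q i (diff y x) < \<epsilon>} \<subseteq> U)"
  unfolding seminorm_topology_def topology_inverse'[OF sn_istopology] by simp

lemma topspace_sn: "topspace (seminorm_topology V diff I q) = V"
proof -
  have "openin (seminorm_topology V diff I q) V"
    unfolding openin_sn by (intro conjI ballI exI[of _ "{}"] exI[of _ 1]) auto
  moreover have "\<And>U. openin (seminorm_topology V diff I q) U \<Longrightarrow> U \<subseteq> V"
    unfolding openin_sn by blast
  ultimately show ?thesis unfolding topspace_def by blast
qed

lemma cont_sn_point:
  assumes "continuous_map (seminorm_topology V diff I q) Y f" "openin Y W" "x \<in> V" "f x \<in> W"
  shows "\<exists>F \<epsilon>. finite F \<and> F \<subseteq> I \<and> \<epsilon> > 0 \<and> (\<forall>y\<in>V. (\<forall>i\<in>F. q i (diff y x) < \<epsilon>) \<longrightarrow> f y \<in> W)"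
proof -
  have "openin (seminorm_topology V diff I q) {y \<in> topspace (seminorm_topology V diff I q). f y \<in> W}"
    using conjunct2[OF assms(1)[unfolded continuous_map_def], rule_format, OF assms(2)] .
  then have o: "openin (seminorm_topology V diff I q) {y \<in> V. f y \<in> W}"
    unfolding topspace_sn .
  have xin: "x \<in> {y \<in> V. f y \<in> W}" using assms(3,4) by simp
  obtain F \<epsilon> where a: "finite F" "F \<subseteq> I" "\<epsilon> > 0" and
    b: "{y \<in> V. \<forall>i\<in>F. q i (diff y x) < \<epsilon>} \<subseteq> {y \<in> V. f y \<in> W}"
    using bspec[OF conjunct2[OF o[unfolded openin_sn]] xin] by (elim exE conjE)
  have c: "\<forall>y\<in>V. (\<forall>i\<in>F. q i (diff y x) < \<epsilon>) \<longrightarrow> f y \<in> W"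
  proof (intro ballI impI)
    fix y assume "y \<in> V" "\<forall>i\<in>F. q i (diff y x) < \<epsilon>"
    then have "y \<in> {y \<in> V. \<forall>i\<in>F. q i (diff y x) < \<epsilon>}" by simp
    then show "f y \<in> W" using b by blast
  qed
  show ?thesis by (rule exI[of _ F], rule exI[of _ \<epsilon>]) (intro conjI a c)
qed

lemma directed_fin:
  fixes p :: "'a \<Rightarrow> 'e \<Rightarrow> real"
  assumes dir: "\<And>\<alpha>1 \<alpha>2. \<exists>\<alpha>3 C. \<forall>a. max (p \<alpha>1 a) (p \<alpha>2 a) \<le> C * p \<alpha>3 a"
    and nn: "\<And>\<alpha> a. 0 \<le> p \<alpha> a" and fin: "finite F"
  shows "\<exists>\<alpha> C. C \<ge> 0 \<and> (\<forall>i\<in>F. \<forall>a. p i a \<le> C * p \<alpha> a)"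
  using fin
proof (induction rule: finite_induct)
  case empty then show ?case by auto
next
  case (insert i F)
  then obtain \<alpha> C where C: "C \<ge> 0" "\<forall>i\<in>F. \<forall>a. p i a \<le> C * p \<alpha> a" by blast
  obtain \<alpha>3 C3 where C3: "\<forall>a. max (p i a) (p \<alpha> a) \<le> C3 * p \<alpha>3 a" using dir by blast
  define D where "D = max C3 0"
  have D: "\<And>a. max (p i a) (p \<alpha> a) \<le> D * p \<alpha>3 a" "D \<ge> 0"
    unfolding D_def using order_trans[OF C3[rule_format] mult_right_mono[OF max.cobounded1 nn]] by auto
  have "0 \<le> max D (C * D) \<and> (\<forall>j\<in>insert i F. \<forall>a. p j a \<le> max D (C * D) * p \<alpha>3 a)"
  proof (intro conjI ballI allI)
    show "0 \<le> max D (C * D)" using D(2) by (simp add: max.coboundedI1)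
    fix j a assume j: "j \<in> insert i F"
    show "p j a \<le> max D (C * D) * p \<alpha>3 a"
    proof (cases "j = i")
      case True
      then have "p j a \<le> D * p \<alpha>3 a" using D(1)[of a] by (metis max.bounded_iff)
      also have "\<dots> \<le> max D (C * D) * p \<alpha>3 a" by (rule mult_right_mono[OF max.cobounded1 nn])
      finally show ?thesis .
    next
      case False
      then have "j \<in> F" using j by blast
      then have "p j a \<le> C * p \<alpha> a" using C(2) by blast
      also have "\<dots> \<le> C * (D * p \<alpha>3 a)" using D(1)[of a] C(1) by (intro mult_left_mono) auto
      also have "\<dots> = (C * D) * p \<alpha>3 a" by (simp add: mult.assoc)
      also have "\<dots> \<le> max D (C * D) * p \<alpha>3 a" by (rule mult_right_mono[OF max.cobounded2 nn])
      finally show ?thesis .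
    qed
  qed
  then show ?case by (rule exI[where x=\<alpha>3, OF exI[where x="max D (C * D)"]])
qed

lemma cont_bound:
  fixes \<phi> :: "'v \<Rightarrow> 'k::real_normed_vector" and q :: "'i \<Rightarrow> 'v \<Rightarrow> real" and d :: "'v \<Rightarrow> 'v \<Rightarrow> 'v"
  assumes bd: "\<And>f g. f \<in> V \<Longrightarrow> g \<in> V \<Longrightarrow> norm (\<phi> f - \<phi> g) \<le> C * q i (d f g)"
    and C: "C \<ge> 0" and iI: "i \<in> I"
  shows "continuous_map (seminorm_topology V d I q) euclidean \<phi>"
  unfolding continuous_map
proof (intro conjI allI impI)
  show "\<phi> ` topspace (seminorm_topology V d I q) \<subseteq> topspace euclidean" by simp
  fix U :: "'k set" assume "openin euclidean U"
  then have oU: "open U" by (rule open_openin[THEN iffD2])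
  show "openin (seminorm_topology V d I q) {x \<in> topspace (seminorm_topology V d I q). \<phi> x \<in> U}"
    unfolding topspace_sn openin_sn
  proof (intro conjI ballI)
    show "{x \<in> V. \<phi> x \<in> U} \<subseteq> V" by auto
    fix x assume x: "x \<in> {x \<in> V. \<phi> x \<in> U}"
    then have xV: "x \<in> V" and xU: "\<phi> x \<in> U" by auto
    obtain r where r: "r > 0" "ball (\<phi> x) r \<subseteq> U"
      using bspec[OF oU[unfolded open_contains_ball] xU] by (elim exE conjE)
    define \<epsilon> where "\<epsilon> = r / (C + 1)"
    have \<epsilon>: "\<epsilon> > 0" using r C by (simp add: \<epsilon>_def)
    have Ce: "C * \<epsilon> < r" using r C unfolding \<epsilon>_def by (simp add: field_simps)
    have sub: "{y \<in> V. \<forall>i'\<in>{i}. q i' (d y x) < \<epsilon>} \<subseteq> {x \<in> V. \<phi> x \<in> U}"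
    proof
      fix y assume "y \<in> {y \<in> V. \<forall>i'\<in>{i}. q i' (d y x) < \<epsilon>}"
      then have yV: "y \<in> V" and yq: "q i (d y x) < \<epsilon>" by auto
      have "norm (\<phi> y - \<phi> x) \<le> C * q i (d y x)" using bd[OF yV xV] .
      also have "\<dots> \<le> C * \<epsilon>" using yq C by (intro mult_left_mono) auto
      finally have "norm (\<phi> y - \<phi> x) < r" using Ce by linarith
      then have "\<phi> y \<in> ball (\<phi> x) r" unfolding mem_ball dist_norm norm_minus_commute[of "\<phi> x"] .
      then have "\<phi> y \<in> U" using r(2) by (rule subsetD[rotated])
      then show "y \<in> {x \<in> V. \<phi> x \<in> U}" using yV by simp
    qed
    have "finite {i}" "{i} \<subseteq> I" using iI by auto
    then show "\<exists>F \<epsilon>. finite F \<and> F \<subseteq> I \<and> \<epsilon> > 0 \<and> {y \<in> V. \<forall>i\<in>F. q i (d y x) < \<epsilon>} \<subseteq> {x \<in> V. \<phi> x \<in> U}"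
      by (intro exI[of _ "{i}"] exI[of _ \<epsilon>] conjI \<epsilon> sub)
  qed
qed

lemma Un_fam:
  assumes un: "\<And>K1 K2. K1 \<in> KK \<Longrightarrow> K2 \<in> KK \<Longrightarrow> K1 \<union> K2 \<in> KK"
    and K0: "K0 \<in> KK" and fin: "finite N" and Kf: "\<And>l. l \<in> N \<Longrightarrow> Kf l \<in> KK"
  shows "K0 \<union> \<Union>(Kf ` N) \<in> KK"
  using fin Kf
proof (induction rule: finite_induct)
  case empty then show ?case using K0 by simp
next
  case (insert l N)
  have "K0 \<union> \<Union>(Kf ` insert l N) = (K0 \<union> \<Union>(Kf ` N)) \<union> Kf l" by auto
  also have "\<dots> \<in> KK"
  proof (rule un)
    show "K0 \<union> \<Union>(Kf ` N) \<in> KK" using insert.IH insert.prems by simp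
    show "Kf l \<in> KK" using insert.prems by simp
  qed
  finally show ?case .
qed

lemma dual_bound:
  fixes sc :: "'k::real_normed_field \<Rightarrow> 'e::ab_group_add \<Rightarrow> 'e" and p :: "'a \<Rightarrow> 'e \<Rightarrow> real"
    and e' :: "'e \<Rightarrow> 'k"
  assumes p_homog: "\<And>\<alpha> c a. p \<alpha> (sc c a) = norm c * p \<alpha> a"
    and pnn: "\<And>\<alpha> a. 0 \<le> p \<alpha> a"
    and p_directed: "\<And>\<alpha>1 \<alpha>2. \<exists>\<alpha>3 C. \<forall>a. max (p \<alpha>1 a) (p \<alpha>2 a) \<le> C * p \<alpha>3 a"
    and e_add: "\<And>a b. e' (a + b) = e' a + e' b"
    and e_hom: "\<And>c a. e' (sc c a) = c * e' a"
    and e_cont: "continuous_map (seminorm_topology UNIV (-) UNIV p) euclidean e'"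
  shows "\<exists>\<alpha> \<eta>. \<eta> > 0 \<and> (\<forall>s a. s > 0 \<longrightarrow> p \<alpha> a < \<eta> * s \<longrightarrow> norm (e' a) < s)"
proof -
  have e0: "e' 0 = 0" using e_add[of 0 0] by simp
  have ob: "openin euclidean (ball (0::'k) 1)" by (rule open_openin[THEN iffD1, OF open_ball])
  have e0b: "e' 0 \<in> ball 0 1" using e0 by simp
  obtain F \<epsilon> where F: "finite F" "\<epsilon> > 0" and Fb: "\<forall>y\<in>UNIV. (\<forall>i\<in>F. p i (y - 0) < \<epsilon>) \<longrightarrow> e' y \<in> ball 0 1"
    using cont_sn_point[OF e_cont ob UNIV_I e0b] by (elim exE conjE)
  obtain \<alpha> C where C: "C \<ge> 0" "\<forall>i\<in>F. \<forall>a. p i a \<le> C * p \<alpha> a"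
    using directed_fin[OF p_directed pnn F(1)] by (elim exE conjE)
  define \<eta> where "\<eta> = \<epsilon> / (C + 1)"
  have \<eta>: "\<eta> > 0" using F C by (simp add: \<eta>_def)
  have Ce: "C * \<eta> < \<epsilon>" using F C unfolding \<eta>_def by (simp add: field_simps)
  have main: "\<forall>s a. s > 0 \<longrightarrow> p \<alpha> a < \<eta> * s \<longrightarrow> norm (e' a) < s"
  proof (intro allI impI)
    fix s :: real and a assume s: "s > 0" and pa: "p \<alpha> a < \<eta> * s"
    define b where "b = sc (of_real (1 / s)) a"
    have pb: "p \<alpha> b = p \<alpha> a / s" unfolding b_def p_homog using s by (simp add: norm_divide)
    have pb2: "p \<alpha> b < \<eta>" unfolding pb using s pa by (simp add: field_simps)
    have "\<forall>i\<in>F. p i (b - 0) < \<epsilon>"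
    proof
      fix i assume i: "i \<in> F"
      have "p i b \<le> C * p \<alpha> b" using C(2)[rule_format, OF i] .
      also have "\<dots> \<le> C * \<eta>" using pb2 C(1) by (intro mult_left_mono) auto
      finally show "p i (b - 0) < \<epsilon>" using Ce by simp
    qed
    then have "e' b \<in> ball 0 1" using Fb[rule_format, OF UNIV_I] by simp
    then have "norm (e' b) < 1" by simp
    moreover have "e' b = of_real (1 / s) * e' a" unfolding b_def e_hom ..
    ultimately have "norm (e' a) / s < 1" using s by (simp add: norm_mult norm_divide)
    then show "norm (e' a) < s" using s by (simp add: field_simps)
  qed
  show ?thesis by (intro exI[of _ \<alpha>] exI[of _ \<eta>] conjI \<eta> main)
qed


theorem proposition4p13:
  fixes sc :: "'k::real_normed_field \<Rightarrow> 'e::ab_group_add \<Rightarrow> 'e"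
    and p :: "'a \<Rightarrow> 'e \<Rightarrow> real"
    and APK :: "('o \<Rightarrow> 'k) set" and APE :: "('o \<Rightarrow> 'e) set"
    and \<omega> :: "'m \<Rightarrow> 'w set" and \<nu> :: "'j \<Rightarrow> 'm \<Rightarrow> 'w \<Rightarrow> real"
    and domTK :: "'m \<Rightarrow> ('o \<Rightarrow> 'k) set" and TK :: "'m \<Rightarrow> ('o \<Rightarrow> 'k) \<Rightarrow> 'w \<Rightarrow> 'k"
    and domTE :: "'m \<Rightarrow> ('o \<Rightarrow> 'e) set" and TE :: "'m \<Rightarrow> ('o \<Rightarrow> 'e) \<Rightarrow> 'w \<Rightarrow> 'e"
    and X :: "'x set" and \<KK> :: "'x set set" and \<pi> :: "'w \<Rightarrow> 'x"
  defines "nK \<equiv> (\<lambda>(_::unit) (t::'k). norm t)"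
  defines "FVK \<equiv> FV APK domTK TK \<omega> \<nu> nK"
    and "FVE \<equiv> FV APE domTE TE \<omega> \<nu> p"
  assumes E_vs: "vector_space sc"
    and E_nontriv: "\<exists>e::'e. e \<noteq> 0"
    and p_seminorm: "\<And>\<alpha> a b. p \<alpha> (a + b) \<le> p \<alpha> a + p \<alpha> b"
    and p_homog: "\<And>\<alpha> c a. p \<alpha> (sc c a) = norm c * p \<alpha> a"
    and p_hausdorff: "\<And>a. a \<noteq> 0 \<Longrightarrow> \<exists>\<alpha>. p \<alpha> a \<noteq> 0"
    and p_directed: "\<And>\<alpha>1 \<alpha>2. \<exists>\<alpha>3 C. \<forall>a. max (p \<alpha>1 a) (p \<alpha>2 a) \<le> C * p \<alpha>3 a"
    and \<omega>_ne: "\<And>m. \<omega> m \<noteq> {}"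
    and \<nu>_nonneg: "\<And>j m x. x \<in> \<omega> m \<Longrightarrow> \<nu> j m x \<ge> 0"
    and \<nu>_pos: "\<And>m x. x \<in> \<omega> m \<Longrightarrow> \<exists>j. \<nu> j m x > 0"
    and APK_sub: "fsubspace (*) APK"
    and APE_sub: "fsubspace sc APE"
    and domTK_sub: "\<And>m. fsubspace (*) (domTK m)"
    and domTE_sub: "\<And>m. fsubspace sc (domTE m)"
    and TK_lin: "\<And>m. flinear_on (*) (domTK m) (\<omega> m) (TK m)"
    and TE_lin: "\<And>m. flinear_on sc (domTE m) (\<omega> m) (TE m)"
    and domK: "hausdorff_directed FVK (FVnorm TK \<omega> \<nu> nK)"
    and domK_delta: "\<And>x. delta_on FVK x \<in> fdual FVK (FVnorm TK \<omega> \<nu> nK)"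
    and domE: "hausdorff_directed FVE (FVnorm TE \<omega> \<nu> p)"
    and \<KK>_X: "\<Union>\<KK> \<subseteq> X"
    and \<KK>_un: "\<And>K1 K2. K1 \<in> \<KK> \<Longrightarrow> K2 \<in> \<KK> \<Longrightarrow> K1 \<union> K2 \<in> \<KK>"
    and \<pi>_X: "\<And>m x. x \<in> \<omega> m \<Longrightarrow> \<pi> x \<in> X"
    and FVK_AP: "FVK \<subseteq> AP_pi \<pi> \<KK> \<omega> \<nu> domTK TK nK (-) (\<lambda>r t. of_real r * t)"
    and FVE_AP: "FVE \<subseteq> AP_pi \<pi> \<KK> \<omega> \<nu> domTE TE p (-) (\<lambda>r a. sc (of_real r) a)"
  shows "((\<forall>u\<in>eps_prod FVK (FVnorm TK \<omega> \<nu> nK) sc p. \<forall>m. \<forall>x\<in>\<omega> m.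
            S_map FVK u \<in> domTE m \<and> TE m (S_map FVK u) x = u (Tfunctional FVK TK m x))
          \<longrightarrow> (\<forall>u\<in>eps_prod FVK (FVnorm TK \<omega> \<nu> nK) sc p.
            S_map FVK u \<in> AP_pi \<pi> \<KK> \<omega> \<nu> domTE TE p (-) (\<lambda>r a. sc (of_real r) a)))
       \<and> ((\<forall>e'\<in>Edual sc p. \<forall>f\<in>FVE. \<forall>m.
            e' \<circ> f \<in> domTK m \<and> (\<forall>x\<in>\<omega> m. TK m (e' \<circ> f) x = e' (TE m f x)))
          \<longrightarrow> (\<forall>e'\<in>Edual sc p. \<forall>f\<in>FVE.
            e' \<circ> f \<in> AP_pi \<pi> \<KK> \<omega> \<nu> domTK TK nK (-) (\<lambda>r t. of_real r * t)))"
proof -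
  interpret E: vector_space sc by (rule E_vs)
  have sc0: "\<And>a. sc 0 a = 0" by (rule E.scale_zero_left)
  have scm: "\<And>c a. sc (-c) a = - sc c a" by (rule E.scale_minus_left)
  have sc1: "\<And>a. sc 1 a = a" by (rule E.scale_one)
  have p0: "\<And>\<alpha>. p \<alpha> 0 = 0"
  proof -
    fix \<alpha>
    have "p \<alpha> (sc 0 0) = norm (0::'k) * p \<alpha> 0" by (rule p_homog)
    then show "p \<alpha> 0 = 0" by (simp add: sc0)
  qed
  have pneg: "\<And>\<alpha> a. p \<alpha> (-a) = p \<alpha> a"
  proof -
    fix \<alpha> a
    have h: "-a = sc (-1) a" by (simp add: scm sc1)
    have "p \<alpha> (sc (-1) a) = norm (-1::'k) * p \<alpha> a" by (rule p_homog)
    then show "p \<alpha> (-a) = p \<alpha> a" unfolding h by simp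
  qed
  have pnn: "\<And>\<alpha> a. 0 \<le> p \<alpha> a"
  proof -
    fix \<alpha> a
    have "p \<alpha> (a + -a) \<le> p \<alpha> a + p \<alpha> (-a)" by (rule p_seminorm)
    then show "0 \<le> p \<alpha> a" by (simp add: p0 pneg)
  qed
  have part2: "(\<forall>e'\<in>Edual sc p. \<forall>f\<in>FVE. \<forall>m.
            e' \<circ> f \<in> domTK m \<and> (\<forall>x\<in>\<omega> m. TK m (e' \<circ> f) x = e' (TE m f x)))
          \<longrightarrow> (\<forall>e'\<in>Edual sc p. \<forall>f\<in>FVE.
            e' \<circ> f \<in> AP_pi \<pi> \<KK> \<omega> \<nu> domTK TK nK (-) (\<lambda>r t. of_real r * t))"
  proof (intro impI ballI)
    assume H2: "\<forall>e'\<in>Edual sc p. \<forall>f\<in>FVE. \<forall>m.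
            e' \<circ> f \<in> domTK m \<and> (\<forall>x\<in>\<omega> m. TK m (e' \<circ> f) x = e' (TE m f x))"
    fix e' f assume e': "e' \<in> Edual sc p" and f: "f \<in> FVE"
    have e'D: "(\<forall>a b. e' (a + b) = e' a + e' b) \<and> (\<forall>c a. e' (sc c a) = c * e' a) \<and>
      continuous_map (seminorm_topology UNIV (-) UNIV p) euclidean e'"
      using e' unfolding Edual_def by simp
    have e_add: "\<And>a b. e' (a + b) = e' a + e' b" using e'D by blast
    have e_hom: "\<And>c a. e' (sc c a) = c * e' a" using e'D by blast
    have e_cont: "continuous_map (seminorm_topology UNIV (-) UNIV p) euclidean e'" using e'D by blast
    have e_diff: "\<And>a b. e' (a - b) = e' a - e' b"
    proof -
      fix a b
      have "e' a = e' (a - b) + e' b" using e_add[of "a - b" b] by simp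
      then show "e' (a - b) = e' a - e' b" by (simp add: algebra_simps)
    qed
    obtain \<alpha> \<eta> where \<eta>: "\<eta> > 0" and bnd: "\<forall>s a. s > 0 \<longrightarrow> p \<alpha> a < \<eta> * s \<longrightarrow> norm (e' a) < s"
      using dual_bound[OF p_homog pnn p_directed e_add e_hom e_cont] by (elim exE conjE)
    have Hm: "\<And>m. e' \<circ> f \<in> domTK m \<and> (\<forall>x\<in>\<omega> m. TK m (e' \<circ> f) x = e' (TE m f x))"
      using bspec[OF bspec[OF H2 e'] f] by (rule spec)
    have HT: "\<And>m x. x \<in> \<omega> m \<Longrightarrow> TK m (e' \<circ> f) x = e' (TE m f x)" using Hm by blast
    have fAP: "f \<in> AP_pi \<pi> \<KK> \<omega> \<nu> domTE TE p (-) (\<lambda>r a. sc (of_real r) a)" using FVE_AP f by (rule subsetD)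
    have fAP2: "\<forall>\<epsilon>>0. \<forall>j m \<alpha>. \<exists>K\<in>\<KK>. (\<exists>c<\<epsilon>. \<forall>x\<in>\<omega> m. \<pi> x \<notin> K \<longrightarrow> p \<alpha> (TE m f x) * \<nu> j m x \<le> c) \<and>
        precompact_sn (-) p {sc (of_real (\<nu> j m x)) (TE m f x) | x. x \<in> \<omega> m \<and> \<pi> x \<in> K}"
      using fAP unfolding AP_pi_def by simp
    show "e' \<circ> f \<in> AP_pi \<pi> \<KK> \<omega> \<nu> domTK TK nK (-) (\<lambda>r t. of_real r * t)"
      unfolding AP_pi_def mem_Collect_eq
    proof (intro conjI allI impI)
      fix m show "e' \<circ> f \<in> domTK m" using Hm by blast
    next
      fix \<epsilon> :: real and j m and \<beta> :: unit assume \<epsilon>: "\<epsilon> > 0"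
      have pos: "\<eta> * \<epsilon> / 2 > 0" using \<eta> \<epsilon> by simp
      note h = spec[OF spec[OF spec[OF mp[OF spec[OF fAP2, of "\<eta> * \<epsilon> / 2"] pos], of j], of m], of \<alpha>]
      from h obtain K c0 where K: "K \<in> \<KK>" and c0: "c0 < \<eta> * \<epsilon> / 2"
        and tail: "\<forall>x\<in>\<omega> m. \<pi> x \<notin> K \<longrightarrow> p \<alpha> (TE m f x) * \<nu> j m x \<le> c0"
        and pc: "precompact_sn (-) p {sc (of_real (\<nu> j m x)) (TE m f x) | x. x \<in> \<omega> m \<and> \<pi> x \<in> K}"
        by (elim bexE exE conjE)
      show "\<exists>K\<in>\<KK>. (\<exists>c<\<epsilon>. \<forall>x\<in>\<omega> m. \<pi> x \<notin> K \<longrightarrow> nK \<beta> (TK m (e' \<circ> f) x) * \<nu> j m x \<le> c) \<and>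
          precompact_sn (-) nK {of_real (\<nu> j m x) * TK m (e' \<circ> f) x | x. x \<in> \<omega> m \<and> \<pi> x \<in> K}"
      proof (rule bexI[OF _ K], rule conjI)
        show "\<exists>c<\<epsilon>. \<forall>x\<in>\<omega> m. \<pi> x \<notin> K \<longrightarrow> nK \<beta> (TK m (e' \<circ> f) x) * \<nu> j m x \<le> c"
        proof (intro exI[of _ "\<epsilon>/2"] conjI ballI impI)
          show "\<epsilon>/2 < \<epsilon>" using \<epsilon> by simp
          fix x assume x: "x \<in> \<omega> m" and \<pi>x: "\<pi> x \<notin> K"
          have \<nu>nn: "\<nu> j m x \<ge> 0" using \<nu>_nonneg x by blast
          define a where "a = sc (of_real (\<nu> j m x)) (TE m f x)"
          have "p \<alpha> a = \<nu> j m x * p \<alpha> (TE m f x)" unfolding a_def p_homog using \<nu>nn by simp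
          also have "\<dots> \<le> c0" using tail[rule_format, OF x \<pi>x] by (simp add: mult.commute)
          finally have pa: "p \<alpha> a < \<eta> * (\<epsilon> / 2)" using c0 by simp
          have e2: "\<epsilon> / 2 > 0" using \<epsilon> by simp
          have "norm (e' a) < \<epsilon> / 2" by (rule bnd[rule_format, OF e2 pa])
          moreover have "e' a = of_real (\<nu> j m x) * e' (TE m f x)" unfolding a_def e_hom ..
          ultimately have "\<nu> j m x * norm (e' (TE m f x)) < \<epsilon> / 2" using \<nu>nn by (simp add: norm_mult)
          then show "nK \<beta> (TK m (e' \<circ> f) x) * \<nu> j m x \<le> \<epsilon> / 2"
            unfolding nK_def HT[OF x] by (simp add: mult.commute)
        qed
        show "precompact_sn (-) nK {of_real (\<nu> j m x) * TK m (e' \<circ> f) x | x. x \<in> \<omega> m \<and> \<pi> x \<in> K}"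
          unfolding precompact_sn_def
        proof (intro allI impI)
          fix F :: "unit set" and \<delta> :: real assume F\<delta>: "finite F \<and> \<delta> > 0"
          then have \<delta>: "\<delta> > 0" by simp
          have fa: "finite {\<alpha>} \<and> \<eta> * \<delta> > 0" using \<eta> \<delta> by simp
          obtain G where G: "finite G" and cov: "{sc (of_real (\<nu> j m x)) (TE m f x) | x. x \<in> \<omega> m \<and> \<pi> x \<in> K}
              \<subseteq> (\<Union>g\<in>G. {y. \<forall>i\<in>{\<alpha>}. p i (y - g) < \<eta> * \<delta>})"
            using pc[unfolded precompact_sn_def, rule_format, OF fa] by (elim exE conjE)
          show "\<exists>G. finite G \<and> {of_real (\<nu> j m x) * TK m (e' \<circ> f) x | x. x \<in> \<omega> m \<and> \<pi> x \<in> K}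
              \<subseteq> (\<Union>g\<in>G. {y. \<forall>i\<in>F. nK i (y - g) < \<delta>})"
          proof (intro exI[of _ "e' ` G"] conjI)
            show "finite (e' ` G)" using G by simp
            show "{of_real (\<nu> j m x) * TK m (e' \<circ> f) x | x. x \<in> \<omega> m \<and> \<pi> x \<in> K}
              \<subseteq> (\<Union>g\<in>e' ` G. {y. \<forall>i\<in>F. nK i (y - g) < \<delta>})"
            proof
              fix z assume "z \<in> {of_real (\<nu> j m x) * TK m (e' \<circ> f) x | x. x \<in> \<omega> m \<and> \<pi> x \<in> K}"
              then obtain x where z: "z = of_real (\<nu> j m x) * TK m (e' \<circ> f) x" and x: "x \<in> \<omega> m"
                and \<pi>x: "\<pi> x \<in> K" by blast
              define a where "a = sc (of_real (\<nu> j m x)) (TE m f x)"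
              have "a \<in> {sc (of_real (\<nu> j m x)) (TE m f x) | x. x \<in> \<omega> m \<and> \<pi> x \<in> K}"
                using x \<pi>x unfolding a_def by blast
              then have "a \<in> (\<Union>g\<in>G. {y. \<forall>i\<in>{\<alpha>}. p i (y - g) < \<eta> * \<delta>})" using cov by (rule subsetD[rotated])
              then obtain g where g: "g \<in> G" and pg: "p \<alpha> (a - g) < \<eta> * \<delta>" by auto
              have "norm (e' (a - g)) < \<delta>" by (rule bnd[rule_format, OF \<delta> pg])
              moreover have "e' (a - g) = z - e' g" unfolding e_diff z a_def e_hom HT[OF x] by simp
              ultimately have "norm (z - e' g) < \<delta>" by simp
              then show "z \<in> (\<Union>g\<in>e' ` G. {y. \<forall>i\<in>F. nK i (y - g) < \<delta>})" using g unfolding nK_def by auto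
            qed
          qed
        qed
      qed
    qed
  qed
  define qK where "qK = FVnorm TK \<omega> \<nu> nK"
  have FVK_iff: "\<And>f. f \<in> FVK \<longleftrightarrow> f \<in> APK \<and> (\<forall>m. f \<in> domTK m) \<and>
      (\<forall>j m (\<alpha>::unit). bdd_above ((\<lambda>x. norm (TK m f x) * \<nu> j m x) ` \<omega> m))"
    unfolding FVK_def FV_def nK_def by simp
  have FVK_APK: "\<And>f. f \<in> FVK \<Longrightarrow> f \<in> APK" using FVK_iff by blast
  have FVK_dom: "\<And>f m. f \<in> FVK \<Longrightarrow> f \<in> domTK m" using FVK_iff by blast
  have bddK: "\<And>f j m. f \<in> FVK \<Longrightarrow> bdd_above ((\<lambda>x. norm (TK m f x) * \<nu> j m x) ` \<omega> m)"
  proof -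
    fix f j m assume f: "f \<in> FVK"
    show "bdd_above ((\<lambda>x. norm (TK m f x) * \<nu> j m x) ` \<omega> m)"
      using spec[OF spec[OF conjunct2[OF conjunct2[OF FVK_iff[THEN iffD1, OF f]]], of j], of m] by simp
  qed
  have Tadd: "\<And>m f g x. f \<in> domTK m \<Longrightarrow> g \<in> domTK m \<Longrightarrow> x \<in> \<omega> m \<Longrightarrow>
      TK m (\<lambda>t. f t + g t) x = TK m f x + TK m g x"
  proof -
    fix m f g x assume fD: "f \<in> domTK m" and gD: "g \<in> domTK m" and x: "x \<in> \<omega> m"
    show "TK m (\<lambda>t. f t + g t) x = TK m f x + TK m g x"
      using bspec[OF bspec[OF bspec[OF conjunct1[OF TK_lin[of m, unfolded flinear_on_def]] fD] gD] x] .
  qed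
  have Tscal: "\<And>m c f x. f \<in> domTK m \<Longrightarrow> x \<in> \<omega> m \<Longrightarrow> TK m (\<lambda>t. c * f t) x = c * TK m f x"
  proof -
    fix m c f x assume fD: "f \<in> domTK m" and x: "x \<in> \<omega> m"
    show "TK m (\<lambda>t. c * f t) x = c * TK m f x"
      using bspec[OF bspec[OF spec[OF conjunct2[OF TK_lin[of m, unfolded flinear_on_def]], of c] fD] x] .
  qed
  have APK_add: "\<And>f g. f \<in> APK \<Longrightarrow> g \<in> APK \<Longrightarrow> (\<lambda>t. f t + g t) \<in> APK"
    using APK_sub unfolding fsubspace_def by blast
  have APK_scal: "\<And>c f. f \<in> APK \<Longrightarrow> (\<lambda>t. c * f t) \<in> APK"
    using APK_sub unfolding fsubspace_def by blast
  have APK_0: "(\<lambda>_. 0) \<in> APK" using APK_sub unfolding fsubspace_def by blast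
  have dom_add: "\<And>m f g. f \<in> domTK m \<Longrightarrow> g \<in> domTK m \<Longrightarrow> (\<lambda>t. f t + g t) \<in> domTK m"
    using domTK_sub unfolding fsubspace_def by blast
  have dom_scal: "\<And>m c f. f \<in> domTK m \<Longrightarrow> (\<lambda>t. c * f t) \<in> domTK m"
    using domTK_sub unfolding fsubspace_def by blast
  have dom_0: "\<And>m. (\<lambda>_. 0) \<in> domTK m" using domTK_sub unfolding fsubspace_def by blast
  have qK_eq: "\<And>j m u f. qK (j, m, u) f = (SUP x\<in>\<omega> m. norm (TK m f x) * \<nu> j m x)"
    unfolding qK_def FVnorm_def nK_def by simp
  have qK_up: "\<And>f j m u x. f \<in> FVK \<Longrightarrow> x \<in> \<omega> m \<Longrightarrow> norm (TK m f x) * \<nu> j m x \<le> qK (j, m, u) f"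
  proof -
    fix f j m u x assume f: "f \<in> FVK" and x: "x \<in> \<omega> m"
    show "norm (TK m f x) * \<nu> j m x \<le> qK (j, m, u) f"
      unfolding qK_eq by (rule cSUP_upper[OF x bddK[OF f]])
  qed
  have qK_le: "\<And>f j m u r. (\<And>x. x \<in> \<omega> m \<Longrightarrow> norm (TK m f x) * \<nu> j m x \<le> r) \<Longrightarrow> qK (j, m, u) f \<le> r"
  proof -
    fix f j m u r assume h: "\<And>x. x \<in> \<omega> m \<Longrightarrow> norm (TK m f x) * \<nu> j m x \<le> r"
    show "qK (j, m, u) f \<le> r" unfolding qK_eq by (rule cSUP_least[OF \<omega>_ne h])
  qed
  have qK_nn: "\<And>f j m u. f \<in> FVK \<Longrightarrow> 0 \<le> qK (j, m, u) f"
  proof -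
    fix f j m u assume f: "f \<in> FVK"
    obtain x where x: "x \<in> \<omega> m" using \<omega>_ne by blast
    have "0 \<le> norm (TK m f x) * \<nu> j m x" using \<nu>_nonneg[OF x] by simp
    also have "\<dots> \<le> qK (j, m, u) f" by (rule qK_up[OF f x])
    finally show "0 \<le> qK (j, m, u) f" .
  qed
  have FVK_add: "\<And>f g. f \<in> FVK \<Longrightarrow> g \<in> FVK \<Longrightarrow> (\<lambda>t. f t + g t) \<in> FVK"
  proof -
    fix f g assume f: "f \<in> FVK" and g: "g \<in> FVK"
    have "\<forall>j m (\<alpha>::unit). bdd_above ((\<lambda>x. norm (TK m (\<lambda>t. f t + g t) x) * \<nu> j m x) ` \<omega> m)"
    proof (intro allI)
      fix j m and \<alpha> :: unit
      show "bdd_above ((\<lambda>x. norm (TK m (\<lambda>t. f t + g t) x) * \<nu> j m x) ` \<omega> m)"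
      proof (rule bdd_aboveI2)
        fix x assume x: "x \<in> \<omega> m"
        have "norm (TK m (\<lambda>t. f t + g t) x) * \<nu> j m x = norm (TK m f x + TK m g x) * \<nu> j m x"
          using Tadd[OF FVK_dom[OF f] FVK_dom[OF g] x] by simp
        also have "\<dots> \<le> (norm (TK m f x) + norm (TK m g x)) * \<nu> j m x"
          using \<nu>_nonneg[OF x] by (intro mult_right_mono norm_triangle_ineq)
        also have "\<dots> = norm (TK m f x) * \<nu> j m x + norm (TK m g x) * \<nu> j m x" by (simp add: algebra_simps)
        also have "\<dots> \<le> qK (j, m, ()) f + qK (j, m, ()) g"
          using qK_up[OF f x] qK_up[OF g x] by (intro add_mono)
        finally show "norm (TK m (\<lambda>t. f t + g t) x) * \<nu> j m x \<le> qK (j, m, ()) f + qK (j, m, ()) g" .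
      qed
    qed
    then show "(\<lambda>t. f t + g t) \<in> FVK"
      using APK_add[OF FVK_APK[OF f] FVK_APK[OF g]] dom_add[OF FVK_dom[OF f] FVK_dom[OF g]]
      unfolding FVK_iff by blast
  qed
  have FVK_scal: "\<And>c f. f \<in> FVK \<Longrightarrow> (\<lambda>t. c * f t) \<in> FVK"
  proof -
    fix c f assume f: "f \<in> FVK"
    have "\<forall>j m (\<alpha>::unit). bdd_above ((\<lambda>x. norm (TK m (\<lambda>t. c * f t) x) * \<nu> j m x) ` \<omega> m)"
    proof (intro allI)
      fix j m and \<alpha> :: unit
      show "bdd_above ((\<lambda>x. norm (TK m (\<lambda>t. c * f t) x) * \<nu> j m x) ` \<omega> m)"
      proof (rule bdd_aboveI2)
        fix x assume x: "x \<in> \<omega> m"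
        have "norm (TK m (\<lambda>t. c * f t) x) * \<nu> j m x = norm c * (norm (TK m f x) * \<nu> j m x)"
          using Tscal[OF FVK_dom[OF f] x] by (simp add: norm_mult)
        also have "\<dots> \<le> norm c * qK (j, m, ()) f"
          using qK_up[OF f x] by (intro mult_left_mono) auto
        finally show "norm (TK m (\<lambda>t. c * f t) x) * \<nu> j m x \<le> norm c * qK (j, m, ()) f" .
      qed
    qed
    then show "(\<lambda>t. c * f t) \<in> FVK"
      using APK_scal[OF FVK_APK[OF f]] dom_scal[OF FVK_dom[OF f]]
      unfolding FVK_iff by blast
  qed
  have fdiff_eq: "\<And>(f::'o \<Rightarrow> 'k) g. fdiff f g = (\<lambda>t. f t + (\<lambda>t. (-1) * g t) t)"
    unfolding fdiff_def by (simp add: fun_eq_iff mult_minus1)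
  have FVK_diff: "\<And>f g. f \<in> FVK \<Longrightarrow> g \<in> FVK \<Longrightarrow> fdiff f g \<in> FVK"
    unfolding fdiff_eq by (intro FVK_add FVK_scal)
  have Tdiff: "\<And>m f g x. f \<in> FVK \<Longrightarrow> g \<in> FVK \<Longrightarrow> x \<in> \<omega> m \<Longrightarrow> TK m (fdiff f g) x = TK m f x - TK m g x"
  proof -
    fix m f g x assume f: "f \<in> FVK" and g: "g \<in> FVK" and x: "x \<in> \<omega> m"
    have "TK m (fdiff f g) x = TK m f x + TK m (\<lambda>t. (-1) * g t) x"
      unfolding fdiff_eq by (rule Tadd[OF FVK_dom[OF f] dom_scal[OF FVK_dom[OF g]] x])
    also have "\<dots> = TK m f x - TK m g x" using Tscal[OF FVK_dom[OF g] x, of "-1"] by simp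
    finally show "TK m (fdiff f g) x = TK m f x - TK m g x" .
  qed
  have T0: "\<And>m x. x \<in> \<omega> m \<Longrightarrow> TK m (\<lambda>_. 0) x = 0"
  proof -
    fix m x assume x: "x \<in> \<omega> m"
    have "TK m (\<lambda>t. 0 * (\<lambda>_. 0) t) x = 0 * TK m (\<lambda>_. 0) x" by (rule Tscal[OF dom_0 x])
    then show "TK m (\<lambda>_. 0) x = 0" by simp
  qed
  have FVK_0: "(\<lambda>_. 0) \<in> FVK"
  proof -
    have "\<forall>j m (\<alpha>::unit). bdd_above ((\<lambda>x. norm (TK m (\<lambda>_. 0) x) * \<nu> j m x) ` \<omega> m)"
    proof (intro allI)
      fix j m and \<alpha> :: unit
      show "bdd_above ((\<lambda>x. norm (TK m (\<lambda>_. 0) x) * \<nu> j m x) ` \<omega> m)"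
        by (rule bdd_aboveI2[where M=0]) (simp add: T0)
    qed
    then show ?thesis using APK_0 dom_0 unfolding FVK_iff by blast
  qed
  define Phi :: "'m \<Rightarrow> 'k \<Rightarrow> 'w \<Rightarrow> 'k \<Rightarrow> 'w \<Rightarrow> ('o \<Rightarrow> 'k) \<Rightarrow> 'k" where
    "Phi = (\<lambda>m a x b y f. if f \<in> FVK then a * TK m f x + b * TK m f y else 0)"
  have qK_dir: "\<forall>i1 i2. \<exists>i3 C. \<forall>f\<in>FVK. max (qK i1 f) (qK i2 f) \<le> C * qK i3 f"
    using domK unfolding hausdorff_directed_def qK_def by (rule conjunct2)
  have Phi_bd: "\<And>m (a::'k) x (b::'k) y. x \<in> \<omega> m \<Longrightarrow> y \<in> \<omega> m \<Longrightarrow>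
      \<exists>i C. C \<ge> 0 \<and> (\<forall>h\<in>FVK. norm (a * TK m h x + b * TK m h y) \<le> C * qK i h)"
  proof -
    fix m and a :: 'k and x and b :: 'k and y assume x: "x \<in> \<omega> m" and y: "y \<in> \<omega> m"
    obtain j1 where j1: "\<nu> j1 m x > 0" using \<nu>_pos[OF x] by blast
    obtain j2 where j2: "\<nu> j2 m y > 0" using \<nu>_pos[OF y] by blast
    obtain i3 C3 where C3: "\<forall>f\<in>FVK. max (qK (j1, m, ()) f) (qK (j2, m, ()) f) \<le> C3 * qK i3 f"
      using spec[OF spec[OF qK_dir, of "(j1, m, ())"], of "(j2, m, ())"] by (elim exE)
    define D where "D = (norm a / \<nu> j1 m x + norm b / \<nu> j2 m y) * max C3 0"
    have D0: "D \<ge> 0" unfolding D_def using j1 j2 by simp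
    have "\<forall>h\<in>FVK. norm (a * TK m h x + b * TK m h y) \<le> D * qK i3 h"
    proof
      fix h assume h: "h \<in> FVK"
      define q1 where "q1 = qK (j1, m, ()) h"
      define q2 where "q2 = qK (j2, m, ()) h"
      define M where "M = max q1 q2"
      have n1: "norm (TK m h x) \<le> q1 / \<nu> j1 m x"
        using qK_up[OF h x, of j1 "()"] j1 unfolding q1_def by (simp add: pos_le_divide_eq)
      have n2: "norm (TK m h y) \<le> q2 / \<nu> j2 m y"
        using qK_up[OF h y, of j2 "()"] j2 unfolding q2_def by (simp add: pos_le_divide_eq)
      have "norm (a * TK m h x + b * TK m h y) \<le> norm a * norm (TK m h x) + norm b * norm (TK m h y)"
        by (metis norm_mult norm_triangle_ineq)
      also have "\<dots> \<le> norm a * (q1 / \<nu> j1 m x) + norm b * (q2 / \<nu> j2 m y)"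
        using n1 n2 by (intro add_mono mult_left_mono) auto
      also have "\<dots> \<le> norm a * (M / \<nu> j1 m x) + norm b * (M / \<nu> j2 m y)"
        using j1 j2 unfolding M_def
        by (intro add_mono mult_left_mono divide_right_mono) auto
      also have "\<dots> = (norm a / \<nu> j1 m x + norm b / \<nu> j2 m y) * M" by (simp add: algebra_simps)
      also have "\<dots> \<le> (norm a / \<nu> j1 m x + norm b / \<nu> j2 m y) * (max C3 0 * qK i3 h)"
      proof (rule mult_left_mono)
        have "M \<le> C3 * qK i3 h" using C3 h unfolding M_def q1_def q2_def by blast
        also have "\<dots> \<le> max C3 0 * qK i3 h"
        proof (rule mult_right_mono)
          obtain j3 m3 u3 where i3: "i3 = (j3, m3, u3)" by (rule prod_cases3)
          show "0 \<le> qK i3 h" unfolding i3 by (rule qK_nn[OF h])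
        qed simp
        finally show "M \<le> max C3 0 * qK i3 h" .
        show "0 \<le> norm a / \<nu> j1 m x + norm b / \<nu> j2 m y" using j1 j2 by simp
      qed
      also have "\<dots> = D * qK i3 h" unfolding D_def by simp
      finally show "norm (a * TK m h x + b * TK m h y) \<le> D * qK i3 h" .
    qed
    then show "\<exists>i C. C \<ge> 0 \<and> (\<forall>h\<in>FVK. norm (a * TK m h x + b * TK m h y) \<le> C * qK i h)"
      using D0 by (intro exI[of _ i3] exI[of _ D] conjI)
  qed
  have Phi_fdual: "\<And>m (a::'k) x (b::'k) y. x \<in> \<omega> m \<Longrightarrow> y \<in> \<omega> m \<Longrightarrow> Phi m a x b y \<in> fdual FVK qK"
  proof -
    fix m and a :: 'k and x and b :: 'k and y assume x: "x \<in> \<omega> m" and y: "y \<in> \<omega> m"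
    obtain i C where C: "C \<ge> 0" and bd: "\<forall>h\<in>FVK. norm (a * TK m h x + b * TK m h y) \<le> C * qK i h"
      using Phi_bd[OF x y, of a b] by (elim exE conjE)
    have add: "\<forall>f\<in>FVK. \<forall>g\<in>FVK. Phi m a x b y (\<lambda>t. f t + g t) = Phi m a x b y f + Phi m a x b y g"
    proof (intro ballI)
      fix f g assume f: "f \<in> FVK" and g: "g \<in> FVK"
      show "Phi m a x b y (\<lambda>t. f t + g t) = Phi m a x b y f + Phi m a x b y g"
        unfolding Phi_def using FVK_add[OF f g] f g Tadd[OF FVK_dom[OF f] FVK_dom[OF g] x]
          Tadd[OF FVK_dom[OF f] FVK_dom[OF g] y] by (simp add: algebra_simps)
    qed
    have scal: "\<forall>c. \<forall>f\<in>FVK. Phi m a x b y (\<lambda>t. c * f t) = c * Phi m a x b y f"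
    proof (intro allI ballI)
      fix c f assume f: "f \<in> FVK"
      show "Phi m a x b y (\<lambda>t. c * f t) = c * Phi m a x b y f"
        unfolding Phi_def using FVK_scal[OF f] f Tscal[OF FVK_dom[OF f] x] Tscal[OF FVK_dom[OF f] y]
        by (simp add: algebra_simps)
    qed
    have cont: "continuous_map (seminorm_topology FVK fdiff UNIV qK) euclidean (Phi m a x b y)"
    proof (rule cont_bound[OF _ C UNIV_I])
      fix f g assume f: "f \<in> FVK" and g: "g \<in> FVK"
      have "Phi m a x b y f - Phi m a x b y g = a * TK m (fdiff f g) x + b * TK m (fdiff f g) y"
        unfolding Phi_def Tdiff[OF f g x] Tdiff[OF f g y] using f g by (simp add: algebra_simps)
      also have "norm \<dots> \<le> C * qK i (fdiff f g)" using bd FVK_diff[OF f g] by blast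
      finally show "norm (Phi m a x b y f - Phi m a x b y g) \<le> C * qK i (fdiff f g)" .
    qed
    have zero: "\<forall>f. f \<notin> FVK \<longrightarrow> Phi m a x b y f = 0" unfolding Phi_def by simp
    show "Phi m a x b y \<in> fdual FVK qK"
      unfolding fdual_def mem_Collect_eq using add scal cont zero by (intro conjI)
  qed
  have NET: "\<And>B \<rho> j m. B \<subseteq> FVK \<Longrightarrow> compactin (seminorm_topology FVK fdiff UNIV qK) B \<Longrightarrow> \<rho> > 0 \<Longrightarrow>
      \<exists>N. finite N \<and> N \<subseteq> B \<and> (\<forall>f\<in>B. \<exists>l\<in>N. \<forall>x\<in>\<omega> m. norm (TK m f x - TK m l x) * \<nu> j m x < \<rho>)"
  proof -
    fix B and \<rho> :: real and j m
    assume BV: "B \<subseteq> FVK" and cB: "compactin (seminorm_topology FVK fdiff UNIV qK) B" and \<rho>: "\<rho> > 0"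
    define Ub where "Ub = (\<lambda>g. {h \<in> FVK. qK (j, m, ()) (fdiff h g) < \<rho>})"
    have tri: "\<And>h g k. h \<in> FVK \<Longrightarrow> g \<in> FVK \<Longrightarrow> k \<in> FVK \<Longrightarrow>
        qK (j, m, ()) (fdiff h g) \<le> qK (j, m, ()) (fdiff h k) + qK (j, m, ()) (fdiff k g)"
    proof -
      fix h g k assume h: "h \<in> FVK" and g: "g \<in> FVK" and k: "k \<in> FVK"
      show "qK (j, m, ()) (fdiff h g) \<le> qK (j, m, ()) (fdiff h k) + qK (j, m, ()) (fdiff k g)"
      proof (rule qK_le)
        fix x assume x: "x \<in> \<omega> m"
        have "norm (TK m (fdiff h g) x) * \<nu> j m x = norm ((TK m h x - TK m k x) + (TK m k x - TK m g x)) * \<nu> j m x"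
          using Tdiff[OF h g x] by simp
        also have "\<dots> \<le> (norm (TK m h x - TK m k x) + norm (TK m k x - TK m g x)) * \<nu> j m x"
          using \<nu>_nonneg[OF x] by (intro mult_right_mono norm_triangle_ineq)
        also have "\<dots> = norm (TK m (fdiff h k) x) * \<nu> j m x + norm (TK m (fdiff k g) x) * \<nu> j m x"
          unfolding Tdiff[OF h k x] Tdiff[OF k g x] by (simp add: algebra_simps)
        also have "\<dots> \<le> qK (j, m, ()) (fdiff h k) + qK (j, m, ()) (fdiff k g)"
          using qK_up[OF FVK_diff[OF h k] x] qK_up[OF FVK_diff[OF k g] x] by (intro add_mono)
        finally show "norm (TK m (fdiff h g) x) * \<nu> j m x \<le> qK (j, m, ()) (fdiff h k) + qK (j, m, ()) (fdiff k g)" .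
      qed
    qed
    have opn: "\<And>g. g \<in> FVK \<Longrightarrow> openin (seminorm_topology FVK fdiff UNIV qK) (Ub g)"
    proof -
      fix g assume g: "g \<in> FVK"
      show "openin (seminorm_topology FVK fdiff UNIV qK) (Ub g)"
        unfolding openin_sn Ub_def
      proof (intro conjI ballI)
        show "{h \<in> FVK. qK (j, m, ()) (fdiff h g) < \<rho>} \<subseteq> FVK" by auto
        fix h0 assume "h0 \<in> {h \<in> FVK. qK (j, m, ()) (fdiff h g) < \<rho>}"
        then have h0: "h0 \<in> FVK" and s0: "qK (j, m, ()) (fdiff h0 g) < \<rho>" by auto
        define \<epsilon> where "\<epsilon> = \<rho> - qK (j, m, ()) (fdiff h0 g)"
        have \<epsilon>: "\<epsilon> > 0" using s0 unfolding \<epsilon>_def by simp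
        have sub: "{h \<in> FVK. \<forall>i\<in>{(j, m, ())}. qK i (fdiff h h0) < \<epsilon>} \<subseteq> {h \<in> FVK. qK (j, m, ()) (fdiff h g) < \<rho>}"
        proof
          fix h assume "h \<in> {h \<in> FVK. \<forall>i\<in>{(j, m, ())}. qK i (fdiff h h0) < \<epsilon>}"
          then have h: "h \<in> FVK" and hq: "qK (j, m, ()) (fdiff h h0) < \<epsilon>" by auto
          have "qK (j, m, ()) (fdiff h g) \<le> qK (j, m, ()) (fdiff h h0) + qK (j, m, ()) (fdiff h0 g)"
            by (rule tri[OF h g h0])
          also have "\<dots> < \<rho>" using hq unfolding \<epsilon>_def by simp
          finally show "h \<in> {h \<in> FVK. qK (j, m, ()) (fdiff h g) < \<rho>}" using h by simp
        qed
        have fin: "finite {(j, m, ())}" "{(j, m, ())} \<subseteq> UNIV" by auto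
        show "\<exists>F \<epsilon>. finite F \<and> F \<subseteq> UNIV \<and> \<epsilon> > 0 \<and>
            {y \<in> FVK. \<forall>i\<in>F. qK i (fdiff y h0) < \<epsilon>} \<subseteq> {h \<in> FVK. qK (j, m, ()) (fdiff h g) < \<rho>}"
          by (intro exI[of _ "{(j, m, ())}"] exI[of _ \<epsilon>] conjI fin \<epsilon> sub)
      qed
    qed
    have self: "\<And>h. h \<in> FVK \<Longrightarrow> h \<in> Ub h"
    proof -
      fix h assume h: "h \<in> FVK"
      have "qK (j, m, ()) (fdiff h h) \<le> 0"
      proof (rule qK_le)
        fix x assume x: "x \<in> \<omega> m"
        show "norm (TK m (fdiff h h) x) * \<nu> j m x \<le> 0" using Tdiff[OF h h x] by simp
      qed
      then show "h \<in> Ub h" unfolding Ub_def using h \<rho> by simp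
    qed
    have cov: "B \<subseteq> \<Union>(Ub ` B)" using self BV by blast
    have opns: "\<forall>U\<in>Ub ` B. openin (seminorm_topology FVK fdiff UNIV qK) U" using opn BV by blast
    obtain \<F> where F1: "finite \<F>" and F2: "\<F> \<subseteq> Ub ` B" and F3: "B \<subseteq> \<Union>\<F>"
      using conjunct2[OF cB[unfolded compactin_def], rule_format, OF conjI[OF opns cov]] by (elim exE conjE)
    obtain N where N1: "N \<subseteq> B" and N2: "finite N" and N3: "\<F> = Ub ` N"
      using finite_subset_image[OF F1 F2] by (elim exE conjE)
    have "\<forall>f\<in>B. \<exists>l\<in>N. \<forall>x\<in>\<omega> m. norm (TK m f x - TK m l x) * \<nu> j m x < \<rho>"
    proof
      fix f assume f: "f \<in> B"
      then have "f \<in> \<Union>(Ub ` N)" using F3 N3 by blast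
      then obtain l where l: "l \<in> N" and fl: "f \<in> Ub l" by blast
      have fV: "f \<in> FVK" and lV: "l \<in> FVK" using f l N1 BV by auto
      have q: "qK (j, m, ()) (fdiff f l) < \<rho>" using fl unfolding Ub_def by simp
      have "\<forall>x\<in>\<omega> m. norm (TK m f x - TK m l x) * \<nu> j m x < \<rho>"
      proof
        fix x assume x: "x \<in> \<omega> m"
        have "norm (TK m f x - TK m l x) * \<nu> j m x = norm (TK m (fdiff f l) x) * \<nu> j m x"
          using Tdiff[OF fV lV x] by simp
        also have "\<dots> \<le> qK (j, m, ()) (fdiff f l)" by (rule qK_up[OF FVK_diff[OF fV lV] x])
        finally show "norm (TK m f x - TK m l x) * \<nu> j m x < \<rho>" using q by simp
      qed
      then show "\<exists>l\<in>N. \<forall>x\<in>\<omega> m. norm (TK m f x - TK m l x) * \<nu> j m x < \<rho>" using l by blast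
    qed
    then show "\<exists>N. finite N \<and> N \<subseteq> B \<and> (\<forall>f\<in>B. \<exists>l\<in>N. \<forall>x\<in>\<omega> m. norm (TK m f x - TK m l x) * \<nu> j m x < \<rho>)"
      using N1 N2 by (intro exI[of _ N] conjI)
  qed
  have APK2: "\<And>l (\<epsilon>'::real) j' m' (\<beta>::unit). l \<in> FVK \<Longrightarrow> \<epsilon>' > 0 \<Longrightarrow>
      \<exists>K\<in>\<KK>. (\<exists>c<\<epsilon>'. \<forall>x\<in>\<omega> m'. \<pi> x \<notin> K \<longrightarrow> nK \<beta> (TK m' l x) * \<nu> j' m' x \<le> c) \<and>
        precompact_sn (-) nK {of_real (\<nu> j' m' x) * TK m' l x | x. x \<in> \<omega> m' \<and> \<pi> x \<in> K}"
  proof -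
    fix l and \<epsilon>' :: real and j' m' and \<beta> :: unit assume l: "l \<in> FVK" and e: "\<epsilon>' > 0"
    have h: "\<forall>\<epsilon>>0. \<forall>j m \<alpha>. \<exists>K\<in>\<KK>. (\<exists>c<\<epsilon>. \<forall>x\<in>\<omega> m. \<pi> x \<notin> K \<longrightarrow> nK \<alpha> (TK m l x) * \<nu> j m x \<le> c) \<and>
        precompact_sn (-) nK {of_real (\<nu> j m x) * TK m l x | x. x \<in> \<omega> m \<and> \<pi> x \<in> K}"
      using subsetD[OF FVK_AP l] unfolding AP_pi_def by simp
    show "\<exists>K\<in>\<KK>. (\<exists>c<\<epsilon>'. \<forall>x\<in>\<omega> m'. \<pi> x \<notin> K \<longrightarrow> nK \<beta> (TK m' l x) * \<nu> j' m' x \<le> c) \<and>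
        precompact_sn (-) nK {of_real (\<nu> j' m' x) * TK m' l x | x. x \<in> \<omega> m' \<and> \<pi> x \<in> K}"
      using spec[OF spec[OF spec[OF mp[OF spec[OF h, of \<epsilon>'] e], of j'], of m'], of \<beta>] .
  qed
  have part1: "(\<forall>u\<in>eps_prod FVK qK sc p. \<forall>m. \<forall>x\<in>\<omega> m.
            S_map FVK u \<in> domTE m \<and> TE m (S_map FVK u) x = u (Tfunctional FVK TK m x))
          \<longrightarrow> (\<forall>u\<in>eps_prod FVK qK sc p.
            S_map FVK u \<in> AP_pi \<pi> \<KK> \<omega> \<nu> domTE TE p (-) (\<lambda>r a. sc (of_real r) a))"
  proof (intro impI ballI)
    assume H1: "\<forall>u\<in>eps_prod FVK qK sc p. \<forall>m. \<forall>x\<in>\<omega> m.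
            S_map FVK u \<in> domTE m \<and> TE m (S_map FVK u) x = u (Tfunctional FVK TK m x)"
    fix u assume u: "u \<in> eps_prod FVK qK sc p"
    have uD: "(\<forall>y1\<in>fdual FVK qK. \<forall>y2\<in>fdual FVK qK. u (\<lambda>f. y1 f + y2 f) = u y1 + u y2) \<and>
      (\<forall>c. \<forall>y\<in>fdual FVK qK. u (\<lambda>f. c * y f) = sc c (u y)) \<and>
      continuous_map (seminorm_topology (fdual FVK qK) fdiff (acx_compacts FVK qK) kappa_sn)
                    (seminorm_topology UNIV (-) UNIV p) u"
      using u unfolding eps_prod_def by simp
    have u_add: "\<And>y1 y2. y1 \<in> fdual FVK qK \<Longrightarrow> y2 \<in> fdual FVK qK \<Longrightarrow> u (\<lambda>f. y1 f + y2 f) = u y1 + u y2"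
      using uD by blast
    have u_scal: "\<And>c y. y \<in> fdual FVK qK \<Longrightarrow> u (\<lambda>f. c * y f) = sc c (u y)"
      using uD by blast
    have u_cont: "continuous_map (seminorm_topology (fdual FVK qK) fdiff (acx_compacts FVK qK) kappa_sn)
                    (seminorm_topology UNIV (-) UNIV p) u"
      using uD by blast
    define L where "L = (\<lambda>m x. u (Tfunctional FVK TK m x))"
    have Hd: "\<And>m x. x \<in> \<omega> m \<Longrightarrow> S_map FVK u \<in> domTE m \<and> TE m (S_map FVK u) x = L m x"
    proof -
      fix m x assume x: "x \<in> \<omega> m"
      show "S_map FVK u \<in> domTE m \<and> TE m (S_map FVK u) x = L m x"
        using bspec[OF spec[OF bspec[OF H1 u], of m] x] unfolding L_def .
    qed
    have Tf_eq: "\<And>m x. Tfunctional FVK TK m x = Phi m 1 x 0 x"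
      unfolding Tfunctional_def Phi_def by (simp add: fun_eq_iff)
    have Phi_split: "\<And>m a x b y. Phi m a x b y = (\<lambda>f. Phi m a x 0 x f + Phi m b y 0 y f)"
      unfolding Phi_def by (simp add: fun_eq_iff)
    have Phi_sc: "\<And>m a x. Phi m a x 0 x = (\<lambda>f. a * Tfunctional FVK TK m x f)"
      unfolding Phi_def Tfunctional_def by (simp add: fun_eq_iff)
    have Tf_fd: "\<And>m x. x \<in> \<omega> m \<Longrightarrow> Tfunctional FVK TK m x \<in> fdual FVK qK"
      unfolding Tf_eq by (rule Phi_fdual)
    have u_Phi: "\<And>m a x b y. x \<in> \<omega> m \<Longrightarrow> y \<in> \<omega> m \<Longrightarrow> u (Phi m a x b y) = sc a (L m x) + sc b (L m y)"
    proof -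
      fix m a x b y assume x: "x \<in> \<omega> m" and y: "y \<in> \<omega> m"
      have "u (Phi m a x b y) = u (\<lambda>f. Phi m a x 0 x f + Phi m b y 0 y f)"
        by (rule arg_cong[where f=u, OF Phi_split])
      also have "\<dots> = u (Phi m a x 0 x) + u (Phi m b y 0 y)"
        by (rule u_add[OF Phi_fdual[OF x x] Phi_fdual[OF y y]])
      also have "\<dots> = sc a (L m x) + sc b (L m y)"
        unfolding Phi_sc L_def using u_scal[OF Tf_fd[OF x]] u_scal[OF Tf_fd[OF y]] by simp
      finally show "u (Phi m a x b y) = sc a (L m x) + sc b (L m y)" .
    qed
    have CB: "\<And>\<alpha>. \<exists>B \<eta>. \<eta> > 0 \<and> B \<subseteq> FVK \<and> compactin (seminorm_topology FVK fdiff UNIV qK) B \<and>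
        (\<forall>y\<in>fdual FVK qK. (\<forall>f\<in>B. norm (y f) \<le> \<eta>) \<longrightarrow> p \<alpha> (u y) < 1)"
    proof -
      fix \<alpha>
      obtain x0 where x0: "x0 \<in> \<omega> undefined" using \<omega>_ne by blast
      define z where "z = Phi undefined 0 x0 0 x0"
      have zfd: "z \<in> fdual FVK qK" unfolding z_def by (rule Phi_fdual[OF x0 x0])
      have uz: "u z = 0" unfolding z_def u_Phi[OF x0 x0] by (simp add: sc0)
      have z0: "\<And>f. z f = 0" unfolding z_def Phi_def by simp
      have oW: "openin (seminorm_topology UNIV (-) UNIV p) {e. p \<alpha> e < 1}"
        unfolding openin_sn
      proof (intro conjI ballI)
        show "{e. p \<alpha> e < 1} \<subseteq> UNIV" by simp
        fix e0 assume "e0 \<in> {e. p \<alpha> e < 1}"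
        then have e0: "p \<alpha> e0 < 1" by simp
        have sub: "{y \<in> UNIV. \<forall>i\<in>{\<alpha>}. p i (y - e0) < 1 - p \<alpha> e0} \<subseteq> {e. p \<alpha> e < 1}"
        proof
          fix y assume "y \<in> {y \<in> UNIV. \<forall>i\<in>{\<alpha>}. p i (y - e0) < 1 - p \<alpha> e0}"
          then have "p \<alpha> (y - e0) < 1 - p \<alpha> e0" by simp
          moreover have "p \<alpha> y \<le> p \<alpha> (y - e0) + p \<alpha> e0" using p_seminorm[of \<alpha> "y - e0" e0] by simp
          ultimately show "y \<in> {e. p \<alpha> e < 1}" by simp
        qed
        have fin: "finite {\<alpha>}" "{\<alpha>} \<subseteq> UNIV" "1 - p \<alpha> e0 > 0" using e0 by auto
        show "\<exists>F \<epsilon>. finite F \<and> F \<subseteq> UNIV \<and> \<epsilon> > 0 \<and> {y \<in> UNIV. \<forall>i\<in>F. p i (y - e0) < \<epsilon>} \<subseteq> {e. p \<alpha> e < 1}"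
          by (intro exI[of _ "{\<alpha>}"] exI[of _ "1 - p \<alpha> e0"] conjI fin sub)
      qed
      have uzW: "u z \<in> {e. p \<alpha> e < 1}" using uz p0 by simp
      have ex: "\<exists>F \<epsilon>. finite F \<and> F \<subseteq> acx_compacts FVK qK \<and> \<epsilon> > 0 \<and>
          (\<forall>y\<in>fdual FVK qK. (\<forall>i\<in>F. kappa_sn i (fdiff y z) < \<epsilon>) \<longrightarrow> u y \<in> {e. p \<alpha> e < 1})"
        by (rule cont_sn_point[OF u_cont oW zfd]) (simp add: uz p0)
      obtain \<B> \<epsilon> where B1: "finite \<B>" and B2: "\<B> \<subseteq> acx_compacts FVK qK" and \<epsilon>: "\<epsilon> > 0"
        and B3: "\<forall>y\<in>fdual FVK qK. (\<forall>B\<in>\<B>. kappa_sn B (fdiff y z) < \<epsilon>) \<longrightarrow> u y \<in> {e. p \<alpha> e < 1}"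
        using ex by (elim exE conjE)
      define B where "B = \<Union>\<B>"
      have BV: "B \<subseteq> FVK" using B2 unfolding B_def acx_compacts_def by blast
      have cB: "compactin (seminorm_topology FVK fdiff UNIV qK) B"
        unfolding B_def
      proof (rule compactin_Union[OF B1])
        fix S assume "S \<in> \<B>"
        then show "compactin (seminorm_topology FVK fdiff UNIV qK) S" using B2 unfolding acx_compacts_def by blast
      qed
      have key: "\<forall>y\<in>fdual FVK qK. (\<forall>f\<in>B. norm (y f) \<le> \<epsilon> / 2) \<longrightarrow> p \<alpha> (u y) < 1"
      proof (intro ballI impI)
        fix y assume y: "y \<in> fdual FVK qK" and yb: "\<forall>f\<in>B. norm (y f) \<le> \<epsilon> / 2"
        have fz: "fdiff y z = y" unfolding fdiff_def z0 by simp
        have "\<forall>B'\<in>\<B>. kappa_sn B' (fdiff y z) < \<epsilon>"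
        proof
          fix B' assume B': "B' \<in> \<B>"
          have "kappa_sn B' y \<le> \<epsilon> / 2" unfolding kappa_sn_def
          proof (rule cSup_least)
            show "insert 0 ((\<lambda>f. norm (y f)) ` B') \<noteq> {}" by simp
            fix t assume "t \<in> insert 0 ((\<lambda>f. norm (y f)) ` B')"
            then show "t \<le> \<epsilon> / 2" using yb B' \<epsilon> unfolding B_def by auto
          qed
          then show "kappa_sn B' (fdiff y z) < \<epsilon>" using \<epsilon> fz by simp
        qed
        then have "u y \<in> {e. p \<alpha> e < 1}" using B3 y by blast
        then show "p \<alpha> (u y) < 1" by simp
      qed
      have eh: "\<epsilon> / 2 > 0" using \<epsilon> by simp
      show "\<exists>B \<eta>. \<eta> > 0 \<and> B \<subseteq> FVK \<and> compactin (seminorm_topology FVK fdiff UNIV qK) B \<and>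
        (\<forall>y\<in>fdual FVK qK. (\<forall>f\<in>B. norm (y f) \<le> \<eta>) \<longrightarrow> p \<alpha> (u y) < 1)"
        by (intro exI[of _ B] exI[of _ "\<epsilon> / 2"] conjI eh BV cB key)
    qed
    have SC: "\<And>\<alpha> B \<eta> m a x b y s. \<eta> > 0 \<Longrightarrow> B \<subseteq> FVK \<Longrightarrow>
        (\<forall>y\<in>fdual FVK qK. (\<forall>f\<in>B. norm (y f) \<le> \<eta>) \<longrightarrow> p \<alpha> (u y) < 1) \<Longrightarrow>
        x \<in> \<omega> m \<Longrightarrow> y \<in> \<omega> m \<Longrightarrow> s > 0 \<Longrightarrow>
        (\<forall>f\<in>B. norm (a * TK m f x + b * TK m f y) \<le> \<eta> * s) \<Longrightarrow>
        p \<alpha> (sc a (L m x) + sc b (L m y)) < s"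
    proof -
      fix \<alpha> B and \<eta> :: real and m and a :: 'k and x and b :: 'k and y and s :: real
      assume \<eta>: "\<eta> > 0" and BV: "B \<subseteq> FVK"
        and Bk: "\<forall>y\<in>fdual FVK qK. (\<forall>f\<in>B. norm (y f) \<le> \<eta>) \<longrightarrow> p \<alpha> (u y) < 1"
        and x: "x \<in> \<omega> m" and y: "y \<in> \<omega> m" and s: "s > 0"
        and bd: "\<forall>f\<in>B. norm (a * TK m f x + b * TK m f y) \<le> \<eta> * s"
      define a' where "a' = a / of_real s"
      define b' where "b' = b / of_real s"
      have sne: "(of_real s :: 'k) \<noteq> 0" using s by simp
      have fd: "Phi m a' x b' y \<in> fdual FVK qK" by (rule Phi_fdual[OF x y])
      have "\<forall>f\<in>B. norm (Phi m a' x b' y f) \<le> \<eta>"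
      proof
        fix f assume f: "f \<in> B"
        then have fV: "f \<in> FVK" using BV by blast
        have "Phi m a' x b' y f = (a * TK m f x + b * TK m f y) / of_real s"
          unfolding Phi_def a'_def b'_def using fV by (simp add: add_divide_distrib)
        then have "norm (Phi m a' x b' y f) = norm (a * TK m f x + b * TK m f y) / s"
          using s by (simp add: norm_divide)
        also have "\<dots> \<le> \<eta> * s / s" using bd f s by (intro divide_right_mono) auto
        also have "\<dots> = \<eta>" using s by simp
        finally show "norm (Phi m a' x b' y f) \<le> \<eta>" .
      qed
      then have p1: "p \<alpha> (u (Phi m a' x b' y)) < 1" using Bk fd by blast
      have uP: "u (Phi m a' x b' y) = sc a' (L m x) + sc b' (L m y)" by (rule u_Phi[OF x y])
      have "sc (of_real s) (sc a' (L m x) + sc b' (L m y)) = sc a (L m x) + sc b (L m y)"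
        unfolding E.scale_right_distrib E.scale_scale a'_def b'_def using sne by simp
      then have "p \<alpha> (sc a (L m x) + sc b (L m y)) = s * p \<alpha> (u (Phi m a' x b' y))"
        unfolding uP using p_homog s by (metis abs_of_pos norm_of_real)
      also have "\<dots> < s" using p1 s by simp
      finally show "p \<alpha> (sc a (L m x) + sc b (L m y)) < s" .
    qed
    show "S_map FVK u \<in> AP_pi \<pi> \<KK> \<omega> \<nu> domTE TE p (-) (\<lambda>r a. sc (of_real r) a)"
      unfolding AP_pi_def mem_Collect_eq
    proof (intro conjI allI impI)
      fix m
      obtain x where x: "x \<in> \<omega> m" using \<omega>_ne by blast
      show "S_map FVK u \<in> domTE m" using Hd[OF x] by blast
    next
      fix \<epsilon> :: real and j m \<alpha> assume \<epsilon>: "\<epsilon> > 0"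
      obtain B \<eta> where \<eta>: "\<eta> > 0" and BV: "B \<subseteq> FVK" and cB: "compactin (seminorm_topology FVK fdiff UNIV qK) B"
        and Bk: "\<forall>y\<in>fdual FVK qK. (\<forall>f\<in>B. norm (y f) \<le> \<eta>) \<longrightarrow> p \<alpha> (u y) < 1"
        using CB[of \<alpha>] by (elim exE conjE)
      define \<rho> where "\<rho> = \<eta> * \<epsilon> / 8"
      have \<rho>: "\<rho> > 0" using \<eta> \<epsilon> by (simp add: \<rho>_def)
      obtain N where N1: "finite N" and N2: "N \<subseteq> B"
        and N3: "\<forall>f\<in>B. \<exists>l\<in>N. \<forall>x\<in>\<omega> m. norm (TK m f x - TK m l x) * \<nu> j m x < \<rho>"
        using NET[OF BV cB \<rho>, where j=j and m=m] by (elim exE conjE)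
      have tl: "\<forall>l\<in>N. \<exists>K. K \<in> \<KK> \<and> (\<forall>x\<in>\<omega> m. \<pi> x \<notin> K \<longrightarrow> norm (TK m l x) * \<nu> j m x < \<rho>)"
      proof
        fix l assume l: "l \<in> N"
        then have lV: "l \<in> FVK" using N2 BV by blast
        obtain K c where K: "K \<in> \<KK>" and c: "c < \<rho>"
          and tail: "\<forall>x\<in>\<omega> m. \<pi> x \<notin> K \<longrightarrow> nK () (TK m l x) * \<nu> j m x \<le> c"
          using APK2[OF lV \<rho>, where j'=j and m'=m and \<beta>="()"] by (elim bexE exE conjE)
        have "\<forall>x\<in>\<omega> m. \<pi> x \<notin> K \<longrightarrow> norm (TK m l x) * \<nu> j m x < \<rho>"
        proof (intro ballI impI)
          fix x assume "x \<in> \<omega> m" "\<pi> x \<notin> K"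
          then have "nK () (TK m l x) * \<nu> j m x \<le> c" using tail by blast
          then show "norm (TK m l x) * \<nu> j m x < \<rho>" using c unfolding nK_def by simp
        qed
        then show "\<exists>K. K \<in> \<KK> \<and> (\<forall>x\<in>\<omega> m. \<pi> x \<notin> K \<longrightarrow> norm (TK m l x) * \<nu> j m x < \<rho>)"
          using K by (intro exI[of _ K] conjI)
      qed
      obtain Kf where Kf: "\<forall>l\<in>N. Kf l \<in> \<KK> \<and> (\<forall>x\<in>\<omega> m. \<pi> x \<notin> Kf l \<longrightarrow> norm (TK m l x) * \<nu> j m x < \<rho>)"
        using bchoice[OF tl] by (elim exE)
      have "\<exists>K\<in>\<KK>. (\<exists>c<1. \<forall>x\<in>\<omega> m. \<pi> x \<notin> K \<longrightarrow> nK () (TK m (\<lambda>_. 0) x) * \<nu> j m x \<le> c) \<and>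
        precompact_sn (-) nK {of_real (\<nu> j m x) * TK m (\<lambda>_. 0) x | x. x \<in> \<omega> m \<and> \<pi> x \<in> K}"
        by (rule APK2[OF FVK_0, where j'=j and m'=m and \<beta>="()"]) simp
      then obtain K0 where K0: "K0 \<in> \<KK>" by (elim bexE)
      define K where "K = K0 \<union> \<Union>(Kf ` N)"
      have Kf1: "\<And>l. l \<in> N \<Longrightarrow> Kf l \<in> \<KK>" using Kf by simp
      have KK: "K \<in> \<KK>" unfolding K_def
        by (rule Un_fam[OF \<KK>_un K0 N1 Kf1])
      show "\<exists>K\<in>\<KK>. (\<exists>c<\<epsilon>. \<forall>x\<in>\<omega> m. \<pi> x \<notin> K \<longrightarrow> p \<alpha> (TE m (S_map FVK u) x) * \<nu> j m x \<le> c) \<and>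
          precompact_sn (-) p {sc (of_real (\<nu> j m x)) (TE m (S_map FVK u) x) | x. x \<in> \<omega> m \<and> \<pi> x \<in> K}"
      proof (rule bexI[OF _ KK], rule conjI)
        show "\<exists>c<\<epsilon>. \<forall>x\<in>\<omega> m. \<pi> x \<notin> K \<longrightarrow> p \<alpha> (TE m (S_map FVK u) x) * \<nu> j m x \<le> c"
        proof (intro exI[of _ "\<epsilon> / 2"] conjI ballI impI)
          show "\<epsilon> / 2 < \<epsilon>" using \<epsilon> by simp
          fix x assume x: "x \<in> \<omega> m" and \<pi>x: "\<pi> x \<notin> K"
          have \<nu>nn: "\<nu> j m x \<ge> 0" by (rule \<nu>_nonneg[OF x])
          have bd: "\<forall>f\<in>B. norm (of_real (\<nu> j m x) * TK m f x + 0 * TK m f x) \<le> \<eta> * (\<epsilon> / 2)"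
          proof
            fix f assume f: "f \<in> B"
            obtain l where l: "l \<in> N" and fl: "\<forall>x\<in>\<omega> m. norm (TK m f x - TK m l x) * \<nu> j m x < \<rho>"
              using N3 f by blast
            have \<pi>l: "\<pi> x \<notin> Kf l" using \<pi>x l unfolding K_def by blast
            have t1: "norm (TK m l x) * \<nu> j m x < \<rho>" using Kf l x \<pi>l by blast
            have t2: "norm (TK m f x - TK m l x) * \<nu> j m x < \<rho>" using fl x by blast
            have "norm (of_real (\<nu> j m x) * TK m f x + 0 * TK m f x) = norm (TK m f x) * \<nu> j m x"
              using \<nu>nn by (simp add: norm_mult)
            also have "\<dots> \<le> (norm (TK m f x - TK m l x) + norm (TK m l x)) * \<nu> j m x"
              using \<nu>nn norm_triangle_ineq[of "TK m f x - TK m l x" "TK m l x"] by (intro mult_right_mono) simp_all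
            also have "\<dots> < 2 * \<rho>" using t1 t2 by (simp add: algebra_simps)
            also have "\<dots> \<le> \<eta> * (\<epsilon> / 2)" unfolding \<rho>_def using \<eta> \<epsilon> by simp
            finally show "norm (of_real (\<nu> j m x) * TK m f x + 0 * TK m f x) \<le> \<eta> * (\<epsilon> / 2)" by simp
          qed
          have e2: "\<epsilon> / 2 > 0" using \<epsilon> by simp
          have "p \<alpha> (sc (of_real (\<nu> j m x)) (L m x) + sc 0 (L m x)) < \<epsilon> / 2"
            by (rule SC[OF \<eta> BV Bk x x e2 bd])
          then have "\<nu> j m x * p \<alpha> (L m x) < \<epsilon> / 2" using \<nu>nn by (simp add: p_homog sc0)
          then show "p \<alpha> (TE m (S_map FVK u) x) * \<nu> j m x \<le> \<epsilon> / 2" using Hd[OF x] by (simp add: mult.commute)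
        qed
        show "precompact_sn (-) p {sc (of_real (\<nu> j m x)) (TE m (S_map FVK u) x) | x. x \<in> \<omega> m \<and> \<pi> x \<in> K}"
          unfolding precompact_sn_def
        proof (intro allI impI)
          fix F' :: "'a set" and \<delta> :: real assume F\<delta>: "finite F' \<and> \<delta> > 0"
          have F'fin: "finite F'" and \<delta>: "\<delta> > 0" using F\<delta> by auto
          obtain \<alpha>' C' where C': "C' \<ge> 0" and C'F: "\<forall>i\<in>F'. \<forall>a. p i a \<le> C' * p \<alpha>' a"
            using directed_fin[OF p_directed pnn F'fin] by (elim exE conjE)
          obtain B' \<eta>' where \<eta>': "\<eta>' > 0" and B'V: "B' \<subseteq> FVK"
            and cB': "compactin (seminorm_topology FVK fdiff UNIV qK) B'"
            and Bk': "\<forall>y\<in>fdual FVK qK. (\<forall>f\<in>B'. norm (y f) \<le> \<eta>') \<longrightarrow> p \<alpha>' (u y) < 1"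
            using CB[of \<alpha>'] by (elim exE conjE)
          define s where "s = \<delta> / (C' + 1)"
          have s: "s > 0" using \<delta> C' by (simp add: s_def)
          have C's: "C' * s < \<delta>" using \<delta> C' unfolding s_def by (simp add: field_simps)
          define \<rho>' where "\<rho>' = \<eta>' * s / 4"
          have \<rho>': "\<rho>' > 0" using \<eta>' s by (simp add: \<rho>'_def)
          obtain N' where N'1: "finite N'" and N'2: "N' \<subseteq> B'"
            and N'3: "\<forall>f\<in>B'. \<exists>l\<in>N'. \<forall>x\<in>\<omega> m. norm (TK m f x - TK m l x) * \<nu> j m x < \<rho>'"
            using NET[OF B'V cB' \<rho>', where j=j and m=m] by (elim exE conjE)
          have gl: "\<forall>l\<in>N'. \<exists>Gs. finite Gs \<and> (\<forall>x\<in>\<omega> m. \<exists>v\<in>insert 0 Gs. norm (of_real (\<nu> j m x) * TK m l x - v) < \<rho>')"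
          proof
            fix l assume l: "l \<in> N'"
            then have lV: "l \<in> FVK" using N'2 B'V by blast
            obtain Kl c where Kl: "Kl \<in> \<KK>" and c: "c < \<rho>'"
              and tail: "\<forall>x\<in>\<omega> m. \<pi> x \<notin> Kl \<longrightarrow> nK () (TK m l x) * \<nu> j m x \<le> c"
              and pc: "precompact_sn (-) nK {of_real (\<nu> j m x) * TK m l x | x. x \<in> \<omega> m \<and> \<pi> x \<in> Kl}"
              using APK2[OF lV \<rho>', where j'=j and m'=m and \<beta>="()"] by (elim bexE exE conjE)
            have fa: "finite {()} \<and> \<rho>' > 0" using \<rho>' by simp
            obtain Gs where Gs1: "finite Gs"
              and Gs2: "{of_real (\<nu> j m x) * TK m l x | x. x \<in> \<omega> m \<and> \<pi> x \<in> Kl}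
                \<subseteq> (\<Union>g\<in>Gs. {y. \<forall>i\<in>{()}. nK i (y - g) < \<rho>'})"
              using pc[unfolded precompact_sn_def, rule_format, OF fa] by (elim exE conjE)
            have "\<forall>x\<in>\<omega> m. \<exists>v\<in>insert 0 Gs. norm (of_real (\<nu> j m x) * TK m l x - v) < \<rho>'"
            proof
              fix x assume x: "x \<in> \<omega> m"
              show "\<exists>v\<in>insert 0 Gs. norm (of_real (\<nu> j m x) * TK m l x - v) < \<rho>'"
              proof (cases "\<pi> x \<in> Kl")
                case True
                then have "of_real (\<nu> j m x) * TK m l x \<in> {of_real (\<nu> j m x) * TK m l x | x. x \<in> \<omega> m \<and> \<pi> x \<in> Kl}"
                  using x by blast
                then have "of_real (\<nu> j m x) * TK m l x \<in> (\<Union>g\<in>Gs. {y. \<forall>i\<in>{()}. nK i (y - g) < \<rho>'})"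
                  using Gs2 by (rule subsetD[rotated])
                then obtain g where "g \<in> Gs" "norm (of_real (\<nu> j m x) * TK m l x - g) < \<rho>'"
                  unfolding nK_def by auto
                then show ?thesis by blast
              next
                case False
                have "norm (of_real (\<nu> j m x) * TK m l x - 0) = norm (TK m l x) * \<nu> j m x"
                  using \<nu>_nonneg[OF x] by (simp add: norm_mult)
                also have "\<dots> \<le> c" using tail x False unfolding nK_def by blast
                finally have "norm (of_real (\<nu> j m x) * TK m l x - 0) < \<rho>'" using c by simp
                then show ?thesis by blast
              qed
            qed
            then show "\<exists>Gs. finite Gs \<and> (\<forall>x\<in>\<omega> m. \<exists>v\<in>insert 0 Gs. norm (of_real (\<nu> j m x) * TK m l x - v) < \<rho>')"
              using Gs1 by (intro exI[of _ Gs] conjI)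
          qed
          obtain Gf where Gf: "\<forall>l\<in>N'. finite (Gf l) \<and>
              (\<forall>x\<in>\<omega> m. \<exists>v\<in>insert 0 (Gf l). norm (of_real (\<nu> j m x) * TK m l x - v) < \<rho>')"
            using bchoice[OF gl] by (elim exE)
          define \<sigma> where "\<sigma> = (\<lambda>x l. if l \<in> N' then (SOME v. v \<in> insert 0 (Gf l) \<and>
              norm (of_real (\<nu> j m x) * TK m l x - v) < \<rho>') else undefined)"
          have \<sigma>P: "\<And>x l. x \<in> \<omega> m \<Longrightarrow> l \<in> N' \<Longrightarrow>
              \<sigma> x l \<in> insert 0 (Gf l) \<and> norm (of_real (\<nu> j m x) * TK m l x - \<sigma> x l) < \<rho>'"
          proof -
            fix x l assume x: "x \<in> \<omega> m" and l: "l \<in> N'"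
            have ex: "\<exists>v. v \<in> insert 0 (Gf l) \<and> norm (of_real (\<nu> j m x) * TK m l x - v) < \<rho>'"
              using Gf l x by blast
            have "\<sigma> x l = (SOME v. v \<in> insert 0 (Gf l) \<and> norm (of_real (\<nu> j m x) * TK m l x - v) < \<rho>')"
              unfolding \<sigma>_def using l by simp
            then show "\<sigma> x l \<in> insert 0 (Gf l) \<and> norm (of_real (\<nu> j m x) * TK m l x - \<sigma> x l) < \<rho>'"
              using someI_ex[OF ex] by simp
          qed
          have \<sigma>Pi: "\<sigma> ` \<omega> m \<subseteq> PiE N' (\<lambda>l. insert 0 (Gf l))"
          proof
            fix t assume "t \<in> \<sigma> ` \<omega> m"
            then obtain x where x: "x \<in> \<omega> m" and t: "t = \<sigma> x" by blast
            have "\<forall>l\<in>N'. \<sigma> x l \<in> insert 0 (Gf l)" using \<sigma>P[OF x] by blast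
            moreover have "\<sigma> x \<in> extensional N'" unfolding extensional_def \<sigma>_def by simp
            ultimately show "t \<in> PiE N' (\<lambda>l. insert 0 (Gf l))" unfolding t PiE_iff by blast
          qed
          have finPi: "finite (PiE N' (\<lambda>l. insert 0 (Gf l)))"
            using N'1 Gf by (intro finite_PiE) auto
          have fin\<sigma>: "finite (\<sigma> ` \<omega> m)" by (rule finite_subset[OF \<sigma>Pi finPi])
          define rep where "rep = (\<lambda>t. SOME x. x \<in> \<omega> m \<and> \<sigma> x = t)"
          have repP: "\<And>x. x \<in> \<omega> m \<Longrightarrow> rep (\<sigma> x) \<in> \<omega> m \<and> \<sigma> (rep (\<sigma> x)) = \<sigma> x"
          proof -
            fix x assume x: "x \<in> \<omega> m"
            show "rep (\<sigma> x) \<in> \<omega> m \<and> \<sigma> (rep (\<sigma> x)) = \<sigma> x"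
              unfolding rep_def by (rule someI[of "\<lambda>x'. x' \<in> \<omega> m \<and> \<sigma> x' = \<sigma> x" x]) (simp add: x)
          qed
          define G' where "G' = (\<lambda>x. sc (of_real (\<nu> j m x)) (L m x)) ` (rep ` (\<sigma> ` \<omega> m))"
          have finG': "finite G'" unfolding G'_def using fin\<sigma> by simp
          have cover: "{sc (of_real (\<nu> j m x)) (TE m (S_map FVK u) x) | x. x \<in> \<omega> m \<and> \<pi> x \<in> K}
              \<subseteq> (\<Union>g\<in>G'. {y. \<forall>i\<in>F'. p i (y - g) < \<delta>})"
          proof
            fix e assume "e \<in> {sc (of_real (\<nu> j m x)) (TE m (S_map FVK u) x) | x. x \<in> \<omega> m \<and> \<pi> x \<in> K}"
            then obtain x where e: "e = sc (of_real (\<nu> j m x)) (TE m (S_map FVK u) x)" and x: "x \<in> \<omega> m"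
              by blast
            define x' where "x' = rep (\<sigma> x)"
            have x': "x' \<in> \<omega> m" and \<sigma>x': "\<sigma> x' = \<sigma> x" using repP[OF x] unfolding x'_def by auto
            define g where "g = sc (of_real (\<nu> j m x')) (L m x')"
            have gG: "g \<in> G'" unfolding G'_def g_def x'_def using x by blast
            have bd: "\<forall>f\<in>B'. norm (of_real (\<nu> j m x) * TK m f x + (- of_real (\<nu> j m x')) * TK m f x') \<le> \<eta>' * s"
            proof
              fix f assume f: "f \<in> B'"
              obtain l where l: "l \<in> N'" and fl: "\<forall>x\<in>\<omega> m. norm (TK m f x - TK m l x) * \<nu> j m x < \<rho>'"
                using N'3 f by blast
              have a1: "norm (TK m f x - TK m l x) * \<nu> j m x < \<rho>'" using fl x by blast
              have a2: "norm (TK m f x' - TK m l x') * \<nu> j m x' < \<rho>'" using fl x' by blast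
              have a3: "norm (of_real (\<nu> j m x) * TK m l x - \<sigma> x l) < \<rho>'" using \<sigma>P[OF x l] by blast
              have a4: "norm (of_real (\<nu> j m x') * TK m l x' - \<sigma> x l) < \<rho>'" using \<sigma>P[OF x' l] \<sigma>x' by simp
              have \<nu>x: "\<nu> j m x \<ge> 0" and \<nu>x': "\<nu> j m x' \<ge> 0" using \<nu>_nonneg x x' by auto
              define A where "A = of_real (\<nu> j m x) * (TK m f x - TK m l x)"
              define B2 where "B2 = of_real (\<nu> j m x) * TK m l x - \<sigma> x l"
              define C2 where "C2 = of_real (\<nu> j m x') * TK m l x' - \<sigma> x l"
              define D2 where "D2 = of_real (\<nu> j m x') * (TK m f x' - TK m l x')"
              have eq: "of_real (\<nu> j m x) * TK m f x + (- of_real (\<nu> j m x')) * TK m f x' = A + B2 - C2 - D2"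
                unfolding A_def B2_def C2_def D2_def by (simp add: algebra_simps)
              have nA: "norm A < \<rho>'" unfolding A_def using a1 \<nu>x by (simp add: norm_mult mult.commute)
              have nD: "norm D2 < \<rho>'" unfolding D2_def using a2 \<nu>x' by (simp add: norm_mult mult.commute)
              have "norm (A + B2 - C2 - D2) \<le> norm (A + B2 - C2) + norm D2" by (rule norm_triangle_ineq4)
              moreover have "norm (A + B2 - C2) \<le> norm (A + B2) + norm C2" by (rule norm_triangle_ineq4)
              moreover have "norm (A + B2) \<le> norm A + norm B2" by (rule norm_triangle_ineq)
              ultimately have "norm (A + B2 - C2 - D2) < 4 * \<rho>'"
                using nA nD a3 a4 unfolding B2_def C2_def by linarith
              then show "norm (of_real (\<nu> j m x) * TK m f x + (- of_real (\<nu> j m x')) * TK m f x') \<le> \<eta>' * s"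
                unfolding eq \<rho>'_def by simp
            qed
            have "p \<alpha>' (sc (of_real (\<nu> j m x)) (L m x) + sc (- of_real (\<nu> j m x')) (L m x')) < s"
              by (rule SC[OF \<eta>' B'V Bk' x x' s bd])
            then have pe: "p \<alpha>' (e - g) < s" unfolding e g_def using Hd[OF x] by (simp add: scm)
            have "\<forall>i\<in>F'. p i (e - g) < \<delta>"
            proof
              fix i assume i: "i \<in> F'"
              have "p i (e - g) \<le> C' * p \<alpha>' (e - g)" using C'F i by blast
              also have "\<dots> \<le> C' * s" using pe C' by (intro mult_left_mono) auto
              also have "\<dots> < \<delta>" by (rule C's)
              finally show "p i (e - g) < \<delta>" .
            qed
            then show "e \<in> (\<Union>g\<in>G'. {y. \<forall>i\<in>F'. p i (y - g) < \<delta>})" using gG by blast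
          qed
          show "\<exists>G. finite G \<and> {sc (of_real (\<nu> j m x)) (TE m (S_map FVK u) x) | x. x \<in> \<omega> m \<and> \<pi> x \<in> K}
              \<subseteq> (\<Union>g\<in>G. {y. \<forall>i\<in>F'. p i (y - g) < \<delta>})"
            by (intro exI[of _ G'] conjI finG' cover)
        qed
      qed
    qed
  qed
  show ?thesis using part1 part2 unfolding qK_def by (intro conjI)
qed

end
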